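(* Let $\beta>\beta_c$ and $0<\delta<\beta$. The function $T_\delta$ is $C^1$ on $(0,\infty)$; it is $C^2$ on $(0,q_\delta^{-1/2})\cup(q_\delta^{-1/2},\infty)$ if $0<\delta<\beta/2$ and $C^2$ on $(0,\infty)$ if $\beta/2\le\delta<\beta$. If $\delta\le\beta/2$ (in which case $q^*_\delta=0$), $T_\delta$ is strictly concave on $(0,\infty)$. If $\beta/2<\delta<\beta$ (in which case $q^*_\delta>0$), $T_\delta$ is strictly concave on $(0,(q_\delta^* )^{-1/2})$ and strictly convex on $((q_\delta^* )^{-1/2},\infty)$.
   Context: $\Gamma_\beta=\frac{e^{-\beta}+e^{-3\beta/2}}{1-e^{-\beta/2}}$, $\beta_c$ the unique positive solution of $\Gamma_\beta=1$. $c_\beta=\frac{1+e^{-\beta/2}}{1-e^{-\beta/2}}$, $\mathcal L(h)=\log\sum_{k\in\mathbb Z}e^{hk}e^{-\beta|k|/2}/c_\beta$ for $|h|<\beta/2$. $\mathcal G(h)=\int_0^1\mathcal L(h(x-\frac12))dx$, $\tilde h(q)$ the unique $h\in[0,\beta)$ with $\mathcal G'(h)=q$; $\mathcal H_\delta(s)=\int_0^1\mathcal L(sx+\delta-\frac\beta2)dx$ for $s\in(-\delta,\beta-\delta)$, $s_\delta(q)$ the unique solution of $\mathcal H_\delta'(s)=q$; $\delta_0(q)=\frac\beta2-\frac{\tilde h(q)}2$; $\psi(q,\delta)=\mathcal G(\tilde h(q))-q\tilde h(q)$ if $0\le\delta\le\delta_0(q)$, $\mathcal H_\delta(s_\delta(q))-qs_\delta(q)$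 if $\delta_0(q)<\delta<\beta$. $T_\delta(a)=a\log\Gamma_\beta+a\,\psi(1/a^2,\delta)$ for $a>0$. $q_\delta=\inf\{q>0:\delta>\delta_0(q)\}$ and $q^*_\delta=\inf\{q>0:\delta-\frac\beta2+s_\delta(q)\ge0\}$. *)

theory Defs
  imports "HOL-Analysis.Analysis"
begin

definition Gamma :: "real \<Rightarrow> real" where
  "Gamma \<beta> = (exp (-\<beta>) + exp (-3*\<beta>/2)) / (1 - exp (-\<beta>/2))"

definition beta_c :: real where
  "beta_c = (THE b. b > 0 \<and> Gamma b = 1)"

definition cc :: "real \<Rightarrow> real" where
  "cc \<beta> = (1 + exp (-\<beta>/2)) / (1 - exp (-\<beta>/2))"

text \<open>Log-moment generating function (meaningful for |h| < beta/2).\<close>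
definition LL :: "real \<Rightarrow> real \<Rightarrow> real" where
  "LL \<beta> h = ln ((\<Sum>\<^sub>\<infinity>k::int. exp (h * of_int k) * exp (-\<beta> * of_int \<bar>k\<bar> / 2)) / cc \<beta>)"

definition GG :: "real \<Rightarrow> real \<Rightarrow> real" where
  "GG \<beta> h = integral {0..1} (\<lambda>x. LL \<beta> (h * (x - 1/2)))"

definition htilde :: "real \<Rightarrow> real \<Rightarrow> real" where
  "htilde \<beta> q = (THE h. 0 \<le> h \<and> h < \<beta> \<and> deriv (GG \<beta>) h = q)"

definition HH :: "real \<Rightarrow> real \<Rightarrow> real \<Rightarrow> real" where
  "HH \<beta> \<delta> s = integral {0..1} (\<lambda>x. LL \<beta> (s * x + \<delta> - \<beta>/2))"

definition sdelta :: "real \<Rightarrow> real \<Rightarrow> real \<Rightarrow> real" where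
  "sdelta \<beta> \<delta> q = (THE s. -\<delta> < s \<and> s < \<beta> - \<delta> \<and> deriv (HH \<beta> \<delta>) s = q)"

definition delta0 :: "real \<Rightarrow> real \<Rightarrow> real" where
  "delta0 \<beta> q = \<beta>/2 - htilde \<beta> q / 2"

definition psi :: "real \<Rightarrow> real \<Rightarrow> real \<Rightarrow> real" where
  "psi \<beta> q \<delta> =
     (if 0 \<le> \<delta> \<and> \<delta> \<le> delta0 \<beta> q
      then GG \<beta> (htilde \<beta> q) - q * htilde \<beta> q
      else HH \<beta> \<delta> (sdelta \<beta> \<delta> q) - q * sdelta \<beta> \<delta> q)"

definition TT :: "real \<Rightarrow> real \<Rightarrow> real \<Rightarrow> real" where
  "TT \<beta> \<delta> a = a * ln (Gamma \<beta>) + a * psi \<beta> (1 / a^2) \<delta>"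

definition qdelta :: "real \<Rightarrow> real \<Rightarrow> real" where
  "qdelta \<beta> \<delta> = Inf {q. q > 0 \<and> \<delta> > delta0 \<beta> q}"

definition qstar :: "real \<Rightarrow> real \<Rightarrow> real" where
  "qstar \<beta> \<delta> = Inf {q. q > 0 \<and> \<delta> - \<beta>/2 + sdelta \<beta> \<delta> q \<ge> 0}"

definition strict_convex_on :: "real set \<Rightarrow> (real \<Rightarrow> real) \<Rightarrow> bool" where
  "strict_convex_on S f \<longleftrightarrow> convex S \<and>
    (\<forall>x\<in>S. \<forall>y\<in>S. x \<noteq> y \<longrightarrow> (\<forall>u. 0 < u \<and> u < 1 \<longrightarrow>
        f (u * x + (1 - u) * y) < u * f x + (1 - u) * f y))"

definition strict_concave_on :: "real set \<Rightarrow> (real \<Rightarrow> real) \<Rightarrow> bool" where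
  "strict_concave_on S f \<longleftrightarrow> strict_convex_on S (\<lambda>x. - f x)"

end

theory Submission
  imports Defs
begin


lemma geom_has_sum:
  fixes x :: real assumes "0 \<le> x" "x < 1"
  shows "((\<lambda>n::nat. x ^ n) has_sum 1/(1-x)) UNIV"
  apply (rule sums_nonneg_imp_has_sum)
  using geometric_sums[of x] assms by auto

lemma LL_sum:
  fixes \<beta> h :: real
  assumes "\<bar>h\<bar> < \<beta>/2"
  shows "((\<lambda>k::int. exp (h * of_int k) * exp (-\<beta> * of_int \<bar>k\<bar> / 2)) has_sum
          (1/(1 - exp (h - \<beta>/2)) + exp (-h - \<beta>/2)/(1 - exp (-h-\<beta>/2)))) UNIV"
proof -
  define x where "x = exp (h - \<beta>/2)"
  define y where "y = exp (-h - \<beta>/2)"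
  have x: "0 \<le> x" "x < 1" using assms by (auto simp: x_def)
  have y: "0 \<le> y" "y < 1" using assms by (auto simp: y_def)
  let ?f = "(\<lambda>k::int. exp (h * of_int k) * exp (-\<beta> * of_int \<bar>k\<bar> / 2))"
  have A: "(?f has_sum 1/(1-x)) (int ` UNIV)"
  proof -
    have "((?f \<circ> int) has_sum 1/(1-x)) UNIV"
    proof -
      have "(?f \<circ> int) = (\<lambda>n. x ^ n)"
        by (auto simp: x_def fun_eq_iff exp_of_nat_mult[symmetric] exp_add[symmetric] algebra_simps)
      then show ?thesis using geom_has_sum[OF x] by simp
    qed
    then show ?thesis by (subst has_sum_reindex) (auto simp: inj_on_def)
  qed
  have B: "(?f has_sum y/(1-y)) ((\<lambda>n::nat. - int n - 1) ` UNIV)"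
  proof -
    have "((?f \<circ> (\<lambda>n::nat. - int n - 1)) has_sum y * (1/(1-y))) UNIV"
    proof -
      have "(?f \<circ> (\<lambda>n::nat. - int n - 1)) = (\<lambda>n. y * y ^ n)"
      proof
        fix n :: nat
        have "\<bar>- int n - 1\<bar> = int n + 1" by simp
        then have "(?f \<circ> (\<lambda>n::nat. - int n - 1)) n = exp (h * (- real n - 1)) * exp (-\<beta> * (real n + 1)/2)"
          by simp
        also have "\<dots> = exp ((-h-\<beta>/2) * (real n + 1))"
          by (simp add: exp_add[symmetric] field_simps)
        also have "\<dots> = y * y ^ n"
          by (simp add: y_def exp_of_nat_mult[symmetric] exp_add[symmetric] algebra_simps)
        finally show "(?f \<circ> (\<lambda>n::nat. - int n - 1)) n = y * y ^ n" .
      qed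
      then show ?thesis using has_sum_cmult_right[OF geom_has_sum[OF y], of y] by simp
    qed
    then show ?thesis by (subst has_sum_reindex) (auto simp: inj_on_def)
  qed
  have U: "int ` UNIV \<union> (\<lambda>n::nat. - int n - 1) ` UNIV = (UNIV :: int set)"
  proof -
    { fix k :: int
      have "k \<in> int ` UNIV \<union> (\<lambda>n::nat. - int n - 1) ` UNIV"
      proof (cases "k \<ge> 0")
        case True then show ?thesis by (auto intro!: image_eqI[of _ _ "nat k"])
      next
        case False then show ?thesis by (auto intro!: image_eqI[of _ _ "nat (-k-1)"])
      qed }
    then show ?thesis by auto
  qed
  have "(?f has_sum (1/(1-x) + y/(1-y))) (int ` UNIV \<union> (\<lambda>n::nat. - int n - 1) ` UNIV)"
    by (rule has_sum_Un_disjoint[OF A B]) auto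
  then show ?thesis using U by (simp add: x_def y_def)
qed


definition "gg \<beta> u = exp (u - \<beta>/2) / (1 - exp (u - \<beta>/2))"
definition "L0 \<beta> u = 2 * ln (1 - exp (-\<beta>/2)) - ln (1 - exp (u - \<beta>/2)) - ln (1 - exp (-u - \<beta>/2))"
definition "L1 \<beta> u = gg \<beta> u - gg \<beta> (-u)"
definition "g1 \<beta> u = exp (u - \<beta>/2) / (1 - exp (u - \<beta>/2))^2"
definition "L2 \<beta> u = g1 \<beta> u + g1 \<beta> (-u)"
definition "g2 \<beta> u = exp (u - \<beta>/2) * (1 + exp (u - \<beta>/2)) / (1 - exp (u - \<beta>/2))^3"
definition "L3 \<beta> u = g2 \<beta> u - g2 \<beta> (-u)"

lemma LL_eq:
  assumes "\<bar>h\<bar> < \<beta>/2"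
  shows "LL \<beta> h = L0 \<beta> h"
proof -
  define x where "x = exp (h - \<beta>/2)"
  define y where "y = exp (-h - \<beta>/2)"
  define r where "r = exp (-\<beta>/2)"
  have x: "0 < x" "x < 1" using assms by (auto simp: x_def)
  have y: "0 < y" "y < 1" using assms by (auto simp: y_def)
  have r: "0 < r" "r < 1" using assms by (auto simp: r_def)
  have xy: "x * y = r * r" by (simp add: x_def y_def r_def exp_add[symmetric])
  have S: "(\<Sum>\<^sub>\<infinity>k::int. exp (h * of_int k) * exp (-\<beta> * of_int \<bar>k\<bar> / 2)) = 1/(1-x) + y/(1-y)"
    using infsumI[OF LL_sum[OF assms]] by (simp add: x_def y_def)
  have "(1/(1-x) + y/(1-y)) / cc \<beta> = (1-r)^2 / ((1-x)*(1-y))"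
  proof -
    have "1/(1-x) + y/(1-y) = (1 - x*y)/((1-x)*(1-y))" using x y by (simp add: field_simps)
    also have "\<dots> = (1-r)*(1+r)/((1-x)*(1-y))" using xy by (simp add: algebra_simps)
    finally have e: "1/(1-x) + y/(1-y) = (1-r)*(1+r)/((1-x)*(1-y))" .
    have c: "cc \<beta> = (1+r)/(1-r)" by (simp add: cc_def r_def)
    have nz: "1 - r \<noteq> 0" "1 + r \<noteq> 0" "1 - x \<noteq> 0" "1 - y \<noteq> 0" using x y r by auto
    have D: "(1-x)*(1-y) \<noteq> 0" using nz by simp
    show ?thesis unfolding e c using nz D by (simp add: divide_simps power2_eq_square)
  qed
  then have "LL \<beta> h = ln ((1-r)^2 / ((1-x)*(1-y)))" unfolding LL_def S by simp
  also have "\<dots> = 2 * ln (1-r) - ln (1-x) - ln (1-y)"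
    using x y r by (simp add: ln_div ln_mult ln_realpow)
  finally show ?thesis by (simp add: L0_def x_def y_def r_def)
qed



lemma phi_deriv:
  fixes t :: real assumes "t < 1"
  shows "((\<lambda>t. t / (1 - t)) has_real_derivative 1 / (1-t)^2) (at t)"
proof -
  have "((\<lambda>t. t / (1 - t)) has_real_derivative (1 * (1-t) - (-1) * t) / ((1-t) ^ Suc (Suc 0))) (at t)"
    by (rule DERIV_quotient) (use assms in \<open>auto intro!: derivative_eq_intros\<close>)
  then show ?thesis using assms by (simp add: power2_eq_square)
qed

lemma psi_deriv:
  fixes t :: real assumes "t < 1"
  shows "((\<lambda>t. t / (1 - t)^2) has_real_derivative (1+t) / (1-t)^3) (at t)"
proof -
  have "((\<lambda>t. t / (1 - t)^2) has_real_derivative (1 * (1-t)^2 - (2 * (1-t) * (-1)) * t) / (((1-t)^2) ^ Suc (Suc 0))) (at t)"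
    by (rule DERIV_quotient) (use assms in \<open>auto intro!: derivative_eq_intros\<close>)
  moreover have "(1 * (1-t)^2 - (2 * (1-t) * (-1)) * t) / (((1-t)^2) ^ Suc (Suc 0)) = ((1+t)*(1-t)) / ((1-t)^3*(1-t))"
    by (simp add: power2_eq_square power3_eq_cube algebra_simps)
  moreover have "((1+t)*(1-t)) / ((1-t)^3*(1-t)) = (1+t) / (1-t)^3"
    using assms by simp
  ultimately show ?thesis by simp
qed

lemma exp_shift_deriv: "((\<lambda>u. exp (u - c)) has_real_derivative exp (u - c)) (at u)"
  by (auto intro!: derivative_eq_intros)

lemma gg_deriv:
  assumes "u < \<beta>/2"
  shows "(gg \<beta> has_real_derivative g1 \<beta> u) (at u)"
proof -
  have "exp (u - \<beta>/2) < 1" using assms by simp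
  from DERIV_chain2[OF phi_deriv[OF this] exp_shift_deriv]
  show ?thesis unfolding gg_def g1_def by (simp add: field_simps)
qed

lemma g1_deriv:
  assumes "u < \<beta>/2"
  shows "(g1 \<beta> has_real_derivative g2 \<beta> u) (at u)"
proof -
  have "exp (u - \<beta>/2) < 1" using assms by simp
  from DERIV_chain2[OF psi_deriv[OF this] exp_shift_deriv]
  show ?thesis unfolding g2_def g1_def by (simp add: field_simps)
qed

lemma L0_deriv:
  assumes "\<bar>u\<bar> < \<beta>/2"
  shows "(L0 \<beta> has_real_derivative L1 \<beta> u) (at u)"
proof -
  have a: "0 < 1 - exp (u - \<beta>/2)" "0 < 1 - exp (-u - \<beta>/2)" using assms by auto
  have e1: "((\<lambda>u. 1 - exp (u - \<beta>/2)) has_real_derivative (0 - exp (u-\<beta>/2))) (at u)"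
    by (intro DERIV_diff DERIV_const exp_shift_deriv)
  have e0: "((\<lambda>u. exp (- u - \<beta>/2)) has_real_derivative exp (-u-\<beta>/2) * (- 1 - 0)) (at u)"
    by (intro DERIV_fun_exp DERIV_diff DERIV_minus DERIV_ident DERIV_const)
  have e2: "((\<lambda>u. 1 - exp (-u - \<beta>/2)) has_real_derivative (0 - exp (-u-\<beta>/2) * (- 1 - 0))) (at u)"
    by (intro DERIV_diff DERIV_const e0)
  have d1: "((\<lambda>u. ln (1 - exp (u - \<beta>/2))) has_real_derivative (1 / (1 - exp (u - \<beta>/2))) * (0 - exp (u-\<beta>/2))) (at u)"
    by (rule DERIV_chain2[OF DERIV_ln_divide[OF a(1)] e1])
  have d2: "((\<lambda>u. ln (1 - exp (-u - \<beta>/2))) has_real_derivative (1 / (1 - exp (-u - \<beta>/2))) * (0 - exp (-u-\<beta>/2) * (- 1 - 0))) (at u)"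
    by (rule DERIV_chain2[OF DERIV_ln_divide[OF a(2)] e2])
  have "(L0 \<beta> has_real_derivative 0 - (1 / (1 - exp (u - \<beta>/2))) * (0 - exp (u-\<beta>/2)) - (1 / (1 - exp (-u - \<beta>/2))) * (0 - exp (-u-\<beta>/2) * (- 1 - 0))) (at u)"
    unfolding L0_def by (intro DERIV_diff d1 d2 DERIV_const)
  then show ?thesis unfolding L1_def gg_def by simp
qed

lemma L1_deriv:
  assumes "\<bar>u\<bar> < \<beta>/2"
  shows "(L1 \<beta> has_real_derivative L2 \<beta> u) (at u)"
proof -
  have "u < \<beta>/2" "-u < \<beta>/2" using assms by auto
  have "((\<lambda>u. gg \<beta> (-u)) has_real_derivative g1 \<beta> (-u) * (-1)) (at u)"
    by (rule DERIV_chain2[OF gg_deriv[OF \<open>-u < \<beta>/2\<close>] DERIV_minus[OF DERIV_ident]])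
  from DERIV_diff[OF gg_deriv[OF \<open>u < \<beta>/2\<close>] this] show ?thesis unfolding L1_def L2_def
    by simp
qed

lemma L2_deriv:
  assumes "\<bar>u\<bar> < \<beta>/2"
  shows "(L2 \<beta> has_real_derivative L3 \<beta> u) (at u)"
proof -
  have "u < \<beta>/2" "-u < \<beta>/2" using assms by auto
  have "((\<lambda>u. g1 \<beta> (-u)) has_real_derivative g2 \<beta> (-u) * (-1)) (at u)"
    by (rule DERIV_chain2[OF g1_deriv[OF \<open>-u < \<beta>/2\<close>] DERIV_minus[OF DERIV_ident]])
  from DERIV_add[OF g1_deriv[OF \<open>u < \<beta>/2\<close>] this] show ?thesis unfolding L2_def L3_def
    by simp
qed

lemma cont_on_V:
  assumes "\<And>u. \<bar>u\<bar> < \<beta>/2 \<Longrightarrow> (f has_real_derivative f' u) (at u)"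
  shows "continuous_on {u. \<bar>u\<bar> < (\<beta>::real)/2} f"
proof (rule continuous_at_imp_continuous_on, safe)
  fix u :: real assume "\<bar>u\<bar> < \<beta>/2"
  then show "isCont f u" using assms DERIV_isCont by blast
qed

lemma g2_isCont:
  fixes \<beta> u :: real
  assumes "u < \<beta>/2" shows "isCont (g2 \<beta>) u"
proof -
  have "exp (u - \<beta>/2) \<noteq> 1" using assms by simp
  then have "1 - exp (u - \<beta>/2) \<noteq> 0" by simp
  then have "(1 - exp (u - \<beta>/2))^3 \<noteq> 0" by simp
  then show ?thesis unfolding g2_def
    by (intro continuous_divide continuous_mult continuous_add continuous_diff continuous_power
         continuous_const continuous_ident continuous_exp) auto
qed

lemma L3_cont: "continuous_on {u. \<bar>u\<bar> < (\<beta>::real)/2} (L3 \<beta>)"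
proof (rule continuous_at_imp_continuous_on, safe)
  fix u :: real assume "\<bar>u\<bar> < \<beta>/2"
  then have "u < \<beta>/2" "-u < \<beta>/2" by auto
  have "isCont (\<lambda>u. g2 \<beta> (-u)) u"
    by (rule continuous_at_compose[OF continuous_minus[OF continuous_ident] g2_isCont[OF \<open>-u < \<beta>/2\<close>], unfolded o_def])
  then show "isCont (L3 \<beta>) u" unfolding L3_def
    using g2_isCont[OF \<open>u < \<beta>/2\<close>] by (intro continuous_diff)
qed

lemma param_deriv:
  fixes K K' m a c :: "real \<Rightarrow> real" and U V :: "real set"
  assumes KD: "\<And>t. t \<in> V \<Longrightarrow> (K has_real_derivative K' t) (at t)"
    and K'c: "continuous_on V K'"
    and mc: "continuous_on {0..1} m" and ac: "continuous_on {0..1} a" and cc: "continuous_on {0..1} c"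
    and U: "open U" "convex U" "p0 \<in> U"
    and UV: "\<And>p x. p \<in> U \<Longrightarrow> x \<in> {0..1} \<Longrightarrow> p * a x + c x \<in> V"
  shows "((\<lambda>p. integral {0..1} (\<lambda>x. m x * K (p * a x + c x))) has_real_derivative
           integral {0..1} (\<lambda>x. m x * a x * K' (p0 * a x + c x))) (at p0)"
proof -
  have Kc: "continuous_on V K"
  proof (rule continuous_at_imp_continuous_on)
    show "\<forall>t\<in>V. isCont K t" using KD DERIV_isCont by blast
  qed
  have "((\<lambda>p. integral (cbox 0 1) (\<lambda>x. m x * K (p * a x + c x))) has_real_derivative
           integral (cbox 0 1) (\<lambda>x. m x * a x * K' (p0 * a x + c x))) (at p0 within U)"
  proof (rule leibniz_rule_field_derivative[where fx = "\<lambda>p x. m x * a x * K' (p * a x + c x)"])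
    fix p x assume "p \<in> U" "x \<in> cbox (0::real) 1"
    then have pv: "p * a x + c x \<in> V" using UV by auto
    have "((\<lambda>p. p * a x + c x) has_real_derivative (1 * a x + 0)) (at p within U)"
      by (intro DERIV_add DERIV_cmult_right DERIV_ident DERIV_const)
    from DERIV_chain2[OF has_field_derivative_at_within[OF KD[OF pv]] this]
    have "((\<lambda>p. K (p * a x + c x)) has_real_derivative K' (p * a x + c x) * a x) (at p within U)"
      by simp
    from DERIV_cmult[OF this, of "m x"]
    show "((\<lambda>p. m x * K (p * a x + c x)) has_real_derivative m x * a x * K' (p * a x + c x)) (at p within U)"
      by (simp add: ac_simps)
  next
    fix p assume "p \<in> U"
    have "continuous_on {0..1} (\<lambda>x. p * a x + c x)" by (intro continuous_intros ac cc)
    then have "continuous_on {0..1} (\<lambda>x. K (p * a x + c x))"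
      by (rule continuous_on_compose2[OF Kc]) (use UV \<open>p \<in> U\<close> in auto)
    then have "continuous_on {0..1} (\<lambda>x. m x * K (p * a x + c x))" by (intro continuous_intros mc)
    then show "(\<lambda>x. m x * K (p * a x + c x)) integrable_on cbox 0 1"
      by (simp add: integrable_continuous_interval)
  next
    have sn: "continuous_on (U \<times> {0..1::real}) snd" by (intro continuous_intros)
    have si: "snd ` (U \<times> {0..1::real}) \<subseteq> {0..1}" by auto
    have m2: "continuous_on (U \<times> {0..1}) (\<lambda>z. m (snd z))" by (rule continuous_on_compose2[OF mc sn si])
    have a2: "continuous_on (U \<times> {0..1}) (\<lambda>z. a (snd z))" by (rule continuous_on_compose2[OF ac sn si])
    have c2: "continuous_on (U \<times> {0..1}) (\<lambda>z. c (snd z))" by (rule continuous_on_compose2[OF cc sn si])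
    have "continuous_on (U \<times> {0..1}) (\<lambda>z. fst z * a (snd z) + c (snd z))"
      by (intro continuous_intros a2 c2)
    then have k2: "continuous_on (U \<times> {0..1}) (\<lambda>z. K' (fst z * a (snd z) + c (snd z)))"
      by (rule continuous_on_compose2[OF K'c]) (use UV in auto)
    have "continuous_on (U \<times> {0..1}) (\<lambda>z. m (snd z) * a (snd z) * K' (fst z * a (snd z) + c (snd z)))"
      by (intro continuous_on_mult m2 a2 k2)
    then show "continuous_on (U \<times> cbox 0 1) (\<lambda>(p, x). m x * a x * K' (p * a x + c x))"
      by (simp add: split_beta)
  qed (use U in auto)
  then show ?thesis using U at_within_open[of p0 U] by simp
qed



lemma inv_sq_deriv:
  fixes a :: real assumes "a > 0"
  shows "((\<lambda>a. 1 / a^2) has_real_derivative -2 / a^3) (at a)"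
proof -
  show ?thesis
    by (rule DERIV_cong[OF DERIV_quotient[OF DERIV_const DERIV_pow]])
       (use assms in \<open>auto simp: power2_eq_square power3_eq_cube\<close>)
qed

locale branch =
  fixes lo hi :: real and F0 F1 F2 k :: "real \<Rightarrow> real" and C :: real
  assumes I: "lo < hi"
    and D0: "\<And>p. lo < p \<Longrightarrow> p < hi \<Longrightarrow> (F0 has_real_derivative F1 p) (at p)"
    and D1: "\<And>p. lo < p \<Longrightarrow> p < hi \<Longrightarrow> (F1 has_real_derivative F2 p) (at p)"
    and F2c: "continuous_on {lo<..<hi} F2"
    and F2pos: "\<And>p. lo < p \<Longrightarrow> p < hi \<Longrightarrow> F2 p > 0"
    and kI: "\<And>q. q > 0 \<Longrightarrow> lo < k q \<and> k q < hi \<and> F1 (k q) = q"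
    and kinv: "\<And>z. lo < z \<Longrightarrow> z < hi \<Longrightarrow> F1 z > 0 \<Longrightarrow> k (F1 z) = z"
begin

definition "Phi q = F0 (k q) - q * k q"
definition "TB a = a * C + a * Phi (1/a^2)"
definition "TD a = C + Phi (1/a^2) + 2 * k (1/a^2) * (1/a^2)"
definition "TDD a = -2/a^3 * (k (1/a^2) + 2*(1/a^2) / F2 (k (1/a^2)))"

lemma k_isCont:
  assumes q: "q > 0" shows "isCont k q"
proof -
  let ?x = "k q"
  have x: "lo < ?x" "?x < hi" "F1 ?x = q" using kI[OF q] by auto
  have F1c: "isCont F1 z" if "lo < z" "z < hi" for z using D1[OF that] DERIV_isCont by blast
  have "continuous_on {lo<..<hi} F1" using F1c by (intro continuous_at_imp_continuous_on) auto
  then have "open ({lo<..<hi} \<inter> F1 -` {0<..})"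
    by (intro continuous_open_preimage) auto
  moreover have "?x \<in> {lo<..<hi} \<inter> F1 -` {0<..}" using x q by auto
  ultimately obtain e where e: "e > 0" "ball ?x e \<subseteq> {lo<..<hi} \<inter> F1 -` {0<..}"
    using open_contains_ball by blast
  have sub: "lo < z \<and> z < hi \<and> F1 z > 0" if "\<bar>z - ?x\<bar> \<le> e/2" for z
  proof -
    have "\<bar>?x - z\<bar> = \<bar>z - ?x\<bar>" by (rule abs_minus_commute)
    then have "z \<in> ball ?x e" using that e(1) by (simp add: dist_real_def)
    then show ?thesis using e(2) by auto
  qed
  have "isCont k (F1 ?x)"
  proof (rule isCont_inverse_function[where d = "e/2" and f = F1 and g = k and x = "k q"])
    show "0 < e/2" using e by simp
    fix z assume "\<bar>z - ?x\<bar> \<le> e / 2"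
    then show "k (F1 z) = z" using sub kinv by blast
  next
    fix z assume "\<bar>z - ?x\<bar> \<le> e / 2"
    then show "isCont F1 z" using sub F1c by blast
  qed
  then show ?thesis using x by simp
qed

lemma k_deriv:
  assumes q: "q > 0" shows "(k has_real_derivative 1 / F2 (k q)) (at q)"
proof -
  have x: "lo < k q" "k q < hi" "F1 (k q) = q" using kI[OF q] by auto
  have "(k has_real_derivative inverse (F2 (k q))) (at q)"
  proof (rule DERIV_inverse_function[where f = F1 and a = 0 and b = "q + 1"])
    show "(F1 has_real_derivative F2 (k q)) (at (k q))" using D1 x by auto
    show "F2 (k q) \<noteq> 0" using F2pos x by (metis less_irrefl)
    show "0 < q" "q < q + 1" using q by auto
    fix y :: real assume "0 < y" "y < q + 1" then show "F1 (k y) = y" using kI by auto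
  next
    show "isCont k q" by (rule k_isCont[OF q])
  qed
  then show ?thesis by (simp add: divide_inverse)
qed

lemma Phi_deriv:
  assumes q: "q > 0" shows "(Phi has_real_derivative - k q) (at q)"
proof -
  have x: "lo < k q" "k q < hi" "F1 (k q) = q" using kI[OF q] by auto
  have "((\<lambda>q. F0 (k q)) has_real_derivative F1 (k q) * (1 / F2 (k q))) (at q)"
    by (rule DERIV_chain2[OF D0[OF x(1,2)] k_deriv[OF q]])
  moreover have "((\<lambda>q. q * k q) has_real_derivative q * (1 / F2 (k q)) + 1 * k q) (at q)"
    by (rule DERIV_mult'[OF DERIV_ident k_deriv[OF q]])
  ultimately have "(Phi has_real_derivative F1 (k q) * (1 / F2 (k q)) - (q * (1 / F2 (k q)) + 1 * k q)) (at q)"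
    unfolding Phi_def by (rule DERIV_diff)
  then show ?thesis using x by simp
qed

lemma TB_deriv:
  assumes a: "a > 0" shows "(TB has_real_derivative TD a) (at a)"
proof -
  have q: "1/a^2 > 0" using a by simp
  have p1: "((\<lambda>a. Phi (1/a^2)) has_real_derivative (- k (1/a^2)) * (-2/a^3)) (at a)"
    by (rule DERIV_chain2[OF Phi_deriv[OF q] inv_sq_deriv[OF a]])
  show ?thesis
    unfolding TB_def
    apply (rule DERIV_cong)
     apply (rule p1 DERIV_ident DERIV_const DERIV_add DERIV_diff DERIV_mult')+
    using a by (simp add: TD_def field_simps power2_eq_square power3_eq_cube)
qed

lemma TD_deriv:
  assumes a: "a > 0" shows "(TD has_real_derivative TDD a) (at a)"
proof -
  have q: "1/a^2 > 0" using a by simp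
  have p1: "((\<lambda>a. Phi (1/a^2)) has_real_derivative (- k (1/a^2)) * (-2/a^3)) (at a)"
    by (rule DERIV_chain2[OF Phi_deriv[OF q] inv_sq_deriv[OF a]])
  have k1: "((\<lambda>a. k (1/a^2)) has_real_derivative (1 / F2 (k (1/a^2))) * (-2/a^3)) (at a)"
    by (rule DERIV_chain2[OF k_deriv[OF q] inv_sq_deriv[OF a]])
  show ?thesis
    unfolding TD_def
    apply (rule DERIV_cong)
     apply (rule p1 k1 inv_sq_deriv[OF a] DERIV_ident DERIV_const DERIV_add DERIV_diff DERIV_mult')+
    using a by (simp add: TDD_def field_simps power2_eq_square power3_eq_cube)
qed

lemma TDD_cont: "continuous_on {0<..} TDD"
proof (rule continuous_at_imp_continuous_on, safe)
  fix a :: real assume a: "0 < a"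
  have q: "1/a^2 > 0" using a by simp
  have x: "lo < k (1/a^2)" "k (1/a^2) < hi" using kI[OF q] by auto
  have ik: "isCont (\<lambda>a. 1/a^2) a" using inv_sq_deriv[OF a] DERIV_isCont by blast
  have kk: "isCont (\<lambda>a. k (1/a^2)) a"
    by (rule continuous_at_compose[OF ik k_isCont[OF q], unfolded o_def])
  have "isCont F2 (k (1/a^2))"
    using F2c x by (simp add: continuous_on_eq_continuous_at)
  then have f2: "isCont (\<lambda>a. F2 (k (1/a^2))) a"
    by (rule continuous_at_compose[OF kk, unfolded o_def])
  have "F2 (k (1/a^2)) \<noteq> 0" using F2pos x by (metis less_irrefl)
  then show "isCont TDD a" unfolding TDD_def using a
    by (intro continuous_mult continuous_add continuous_divide continuous_const continuous_power continuous_ident kk f2 ik) auto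
qed

end



definition "LD \<beta> n u = (if n = 0 then L0 \<beta> u else if n = 1 then L1 \<beta> u else if n = (2::nat) then L2 \<beta> u else L3 \<beta> u)"

lemma LD_deriv:
  assumes "\<bar>u\<bar> < \<beta>/2" "n < 3"
  shows "(LD \<beta> n has_real_derivative LD \<beta> (Suc n) u) (at u)"
proof -
  have "n = 0 \<or> n = 1 \<or> n = 2" using assms(2) by auto
  moreover have "LD \<beta> 0 = L0 \<beta>" "LD \<beta> 1 = L1 \<beta>" "LD \<beta> 2 = L2 \<beta>" "LD \<beta> 3 = L3 \<beta>"
    by (auto simp: LD_def fun_eq_iff)
  ultimately show ?thesis using L0_deriv[OF assms(1)] L1_deriv[OF assms(1)] L2_deriv[OF assms(1)]
    by (auto simp: numeral_2_eq_2 numeral_3_eq_3)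
qed

lemma LD_cont:
  assumes "n \<le> 3"
  shows "continuous_on {u. \<bar>u\<bar> < (\<beta>::real)/2} (LD \<beta> n)"
proof (cases "n < 3")
  case True
  show ?thesis by (rule cont_on_V[where f'="LD \<beta> (Suc n)"], rule LD_deriv) (use True in auto)
next
  case False
  then have "n = 3" using assms by auto
  moreover have "LD \<beta> 3 = L3 \<beta>" by (auto simp: LD_def fun_eq_iff)
  ultimately show ?thesis using L3_cont by simp
qed

lemma rangeG:
  fixes h x \<beta> :: real
  assumes "\<bar>h\<bar> < \<beta>" "x \<in> {0..1}"
  shows "\<bar>h * (x - 1/2)\<bar> < \<beta>/2"
proof -
  have "0 \<le> x" "x \<le> 1" using assms by auto
  have "\<bar>x - 1/2\<bar> \<le> 1/2" using \<open>0 \<le> x\<close> \<open>x \<le> 1\<close> by (intro abs_le_iff[THEN iffD2] conjI) linarith+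
  then have "\<bar>h\<bar> * \<bar>x - 1/2\<bar> \<le> \<bar>h\<bar> * (1/2)" by (intro mult_left_mono) auto
  then show ?thesis using assms(1) by (simp add: abs_mult)
qed

lemma rangeH:
  fixes c s x \<beta> :: real
  assumes "\<bar>c\<bar> < \<beta>/2" "\<bar>s + c\<bar> < \<beta>/2" "x \<in> {0..1}"
  shows "\<bar>s * x + c\<bar> < \<beta>/2"
proof -
  have x: "0 \<le> x" "x \<le> 1" using assms by auto
  have e: "s * x + c = (1 - x) * c + x * (s + c)" by (simp add: algebra_simps)
  have "\<bar>(1 - x) * c + x * (s + c)\<bar> \<le> (1 - x) * \<bar>c\<bar> + x * \<bar>s + c\<bar>"
    using x by (auto simp: abs_mult intro: order.trans[OF abs_triangle_ineq])
  also have "\<dots> < \<beta>/2"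
  proof (cases "x = 0")
    case True then show ?thesis using assms(1) by simp
  next
    case False
    then have "x * \<bar>s + c\<bar> < x * (\<beta>/2)" using x assms(2) by (intro mult_strict_left_mono) auto
    moreover have "(1 - x) * \<bar>c\<bar> \<le> (1 - x) * (\<beta>/2)" using x assms(1) by (intro mult_left_mono) auto
    ultimately show ?thesis by (simp add: algebra_simps)
  qed
  finally show ?thesis using e by simp
qed

lemma contG:
  fixes h \<beta> :: real
  assumes "\<bar>h\<bar> < \<beta>" "n \<le> 3"
  shows "continuous_on {0..1} (\<lambda>x. (x - 1/2)^n * LD \<beta> n (h * (x - 1/2)))"
proof -
  have "continuous_on {0..1} (\<lambda>x. LD \<beta> n (h * (x - 1/2)))"
    by (rule continuous_on_compose2[OF LD_cont[OF assms(2)]]) (use rangeG[OF assms(1)] in \<open>auto intro!: continuous_intros\<close>)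
  then show ?thesis by (intro continuous_intros)
qed

lemma contH:
  fixes c s \<beta> :: real
  assumes "\<bar>c\<bar> < \<beta>/2" "\<bar>s + c\<bar> < \<beta>/2" "n \<le> 3"
  shows "continuous_on {0..1} (\<lambda>x. x^n * LD \<beta> n (s * x + c))"
proof -
  have "continuous_on {0..1} (\<lambda>x. LD \<beta> n (s * x + c))"
    by (rule continuous_on_compose2[OF LD_cont[OF assms(3)]]) (use rangeH[OF assms(1,2)] in \<open>auto intro!: continuous_intros\<close>)
  then show ?thesis by (intro continuous_intros)
qed

lemma intG:
  fixes h \<beta> :: real
  assumes "\<bar>h\<bar> < \<beta>" "n \<le> 3"
  shows "(\<lambda>x. (x - 1/2)^n * LD \<beta> n (h * (x - 1/2))) integrable_on {0..1}"
  using contG[OF assms] integrable_continuous_interval by blast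

lemma intH:
  fixes c s \<beta> :: real
  assumes "\<bar>c\<bar> < \<beta>/2" "\<bar>s + c\<bar> < \<beta>/2" "n \<le> 3"
  shows "(\<lambda>x. x^n * LD \<beta> n (s * x + c)) integrable_on {0..1}"
  using contH[OF assms] integrable_continuous_interval by blast

definition "GI \<beta> n h = integral {0..1} (\<lambda>x. (x - 1/2)^n * LD \<beta> n (h * (x - 1/2)))"
definition "HI \<beta> c n s = integral {0..1} (\<lambda>x. x^n * LD \<beta> n (s * x + c))"

lemma GI_deriv:
  fixes \<beta> h :: real
  assumes "\<bar>h\<bar> < \<beta>" "n < 3"
  shows "(GI \<beta> n has_real_derivative GI \<beta> (Suc n) h) (at h)"
proof -
  have "((\<lambda>p. integral {0..1} (\<lambda>x. (x - 1/2)^n * LD \<beta> n (p * (x - 1/2) + 0))) has_real_derivative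
           integral {0..1} (\<lambda>x. (x - 1/2)^n * (x - 1/2) * LD \<beta> (Suc n) (h * (x - 1/2) + 0))) (at h)"
  proof (rule param_deriv[where V = "{u. \<bar>u\<bar> < \<beta>/2}" and U = "{-\<beta><..<\<beta>}"])
    fix t :: real assume "t \<in> {u. \<bar>u\<bar> < \<beta>/2}"
    then show "(LD \<beta> n has_real_derivative LD \<beta> (Suc n) t) (at t)" using LD_deriv assms(2) by auto
  next
    show "continuous_on {u. \<bar>u\<bar> < \<beta>/2} (LD \<beta> (Suc n))" using LD_cont assms(2) by auto
  next
    fix p x :: real assume "p \<in> {-\<beta><..<\<beta>}" "x \<in> {0..1}"
    then have "-\<beta> < p" "p < \<beta>" "0 \<le> x" "x \<le> 1" by auto
    then have "\<bar>p\<bar> < \<beta>" by (intro abs_less_iff[THEN iffD2] conjI) linarith+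
    moreover have "\<bar>x - 1/2\<bar> \<le> 1/2" using \<open>0 \<le> x\<close> \<open>x \<le> 1\<close> by (intro abs_le_iff[THEN iffD2] conjI) linarith+
    ultimately have "\<bar>p\<bar> < \<beta>" "\<bar>x - 1/2\<bar> \<le> 1/2" by auto
    then have "\<bar>p\<bar> * \<bar>x - 1/2\<bar> \<le> \<bar>p\<bar> * (1/2)" by (intro mult_left_mono) auto
    then show "p * (x - 1/2) + 0 \<in> {u. \<bar>u\<bar> < \<beta>/2}" using \<open>\<bar>p\<bar> < \<beta>\<close> by (simp add: abs_mult)
  qed (use assms in \<open>auto intro!: continuous_intros\<close>)
  then show ?thesis unfolding GI_def power_Suc2 by (simp only: add_0_right)
qed

lemma HI_deriv:
  fixes \<beta> c s :: real
  assumes "\<bar>c\<bar> < \<beta>/2" "\<bar>s + c\<bar> < \<beta>/2" "n < 3"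
  shows "(HI \<beta> c n has_real_derivative HI \<beta> c (Suc n) s) (at s)"
proof -
  have s: "-\<beta>/2 - c < s" "s < \<beta>/2 - c" using assms(2) by (simp_all only: abs_less_iff) linarith+
  have "((\<lambda>p. integral {0..1} (\<lambda>x. x^n * LD \<beta> n (p * x + c))) has_real_derivative
           integral {0..1} (\<lambda>x. x^n * x * LD \<beta> (Suc n) (s * x + c))) (at s)"
  proof (rule param_deriv[where V = "{u. \<bar>u\<bar> < \<beta>/2}" and U = "{-\<beta>/2 - c<..<\<beta>/2 - c}"])
    fix t :: real assume "t \<in> {u. \<bar>u\<bar> < \<beta>/2}"
    then show "(LD \<beta> n has_real_derivative LD \<beta> (Suc n) t) (at t)" using LD_deriv assms(3) by auto
  next
    show "continuous_on {u. \<bar>u\<bar> < \<beta>/2} (LD \<beta> (Suc n))" using LD_cont assms(3) by auto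
  next
    fix p x :: real assume "p \<in> {-\<beta>/2 - c<..<\<beta>/2 - c}" "x \<in> {0..1}"
    then have "-\<beta>/2 - c < p" "p < \<beta>/2 - c" and x: "0 \<le> x" "x \<le> 1" by auto
    then have p: "\<bar>p + c\<bar> < \<beta>/2" by (intro abs_less_iff[THEN iffD2] conjI) linarith+
    have e: "p * x + c = (1 - x) * c + x * (p + c)" by (simp add: algebra_simps)
    have "\<bar>(1 - x) * c + x * (p + c)\<bar> \<le> (1 - x) * \<bar>c\<bar> + x * \<bar>p + c\<bar>"
      using x by (auto simp: abs_mult intro: order.trans[OF abs_triangle_ineq])
    also have "\<dots> < \<beta>/2"
    proof (cases "x = 0")
      case True then show ?thesis using assms(1) by simp
    next
      case False
      then have "x * \<bar>p + c\<bar> < x * (\<beta>/2)" using x p by (intro mult_strict_left_mono) auto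
      moreover have "(1 - x) * \<bar>c\<bar> \<le> (1 - x) * (\<beta>/2)" using x assms(1) by (intro mult_left_mono) auto
      ultimately show ?thesis by (simp add: algebra_simps)
    qed
    finally show "p * x + c \<in> {u. \<bar>u\<bar> < \<beta>/2}" using e by simp
  qed (use assms s in \<open>auto intro!: continuous_intros\<close>)
  then show ?thesis unfolding HI_def power_Suc2 .
qed



lemma gg_pos: fixes \<beta> u :: real assumes "u < \<beta>/2" shows "gg \<beta> u > 0"
  using assms by (simp add: gg_def)

lemma gg_mono: fixes \<beta> u v :: real assumes "u \<le> v" "v < \<beta>/2" shows "gg \<beta> u \<le> gg \<beta> v"
proof -
  have e: "exp (u - \<beta>/2) \<le> exp (v - \<beta>/2)" "exp (v - \<beta>/2) < 1" using assms by auto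
  show ?thesis unfolding gg_def
    by (rule frac_le) (use e in auto)
qed

lemma exp_ge_lin: fixes t :: real shows "1 - t \<le> exp (-t)"
proof -
  have "1 + (-t) \<le> exp (-t)" by (rule exp_ge_add_one_self)
  then show ?thesis by linarith
qed

lemma gg_lower:
  fixes \<beta> u :: real assumes "-(\<beta>/2) \<le> u" "u < \<beta>/2"
  shows "gg \<beta> u \<ge> exp (-\<beta>) / (\<beta>/2 - u)"
proof -
  define t where "t = \<beta>/2 - u"
  have t: "0 < t" "t \<le> \<beta>" using assms by (auto simp: t_def)
  have e: "exp (u - \<beta>/2) = exp (-t)" unfolding t_def minus_diff_eq ..
  have e1: "1 - exp (-t) \<le> t" using exp_ge_lin[of t] by simp
  have e2: "exp (-\<beta>) \<le> exp (-t)" using t by simp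
  have e3: "0 < 1 - exp (-t)" using t by simp
  have "exp (-\<beta>) / t \<le> exp (-t) / t" using e2 t by (simp add: divide_right_mono)
  also have "\<dots> \<le> exp (-t) / (1 - exp (-t))" using e1 e3 by (intro divide_left_mono) auto
  finally have A: "exp (-\<beta>) / t \<le> gg \<beta> u" unfolding gg_def e .
  show ?thesis using A unfolding t_def .
qed

lemma g1_lower:
  fixes \<beta> u :: real assumes "-(\<beta>/2) \<le> u" "u < \<beta>/2"
  shows "g1 \<beta> u \<ge> exp (-\<beta>)"
proof -
  define e where "e = exp (u - \<beta>/2)"
  have e: "0 < e" "e < 1" "exp (-\<beta>) \<le> e" using assms by (auto simp: e_def)
  have "(1 - e)^2 \<le> 1" using e by (simp add: power_le_one)
  moreover have "(1 - e)^2 > 0" using e by simp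
  ultimately have "e \<le> e / (1 - e)^2" using e by (simp add: le_divide_eq)
  then show ?thesis using e unfolding g1_def e_def[symmetric] by linarith
qed

lemma g1_pos: fixes \<beta> u :: real assumes "u < \<beta>/2" shows "g1 \<beta> u > 0"
proof -
  have "exp (u - \<beta>/2) \<noteq> 1" using assms by simp
  then show ?thesis by (simp add: g1_def)
qed

lemma L2_lower:
  fixes \<beta> u :: real assumes "\<bar>u\<bar> < \<beta>/2"
  shows "L2 \<beta> u \<ge> exp (-\<beta>)"
proof -
  have "-(\<beta>/2) \<le> u" "u < \<beta>/2" "-u < \<beta>/2" using assms by auto
  then have "g1 \<beta> u \<ge> exp (-\<beta>)" "g1 \<beta> (-u) > 0" using g1_lower g1_pos by auto
  then show ?thesis unfolding L2_def by linarith
qed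

lemma L1_zero: "L1 \<beta> 0 = 0" by (simp add: L1_def)
lemma L1_odd: "L1 \<beta> (-u) = - L1 \<beta> u" by (simp add: L1_def)
lemma L0_even: "L0 \<beta> (-u) = L0 \<beta> u" by (simp add: L0_def)

lemma L1_lin:
  fixes \<beta> u :: real assumes "\<bar>u\<bar> < \<beta>/2"
  shows "u \<ge> 0 \<Longrightarrow> L1 \<beta> u \<ge> exp (-\<beta>) * u" and "u \<le> 0 \<Longrightarrow> L1 \<beta> u \<le> exp (-\<beta>) * u"
proof -
  define f where "f v = L1 \<beta> v - exp (-\<beta>) * v" for v
  have fd: "\<exists>y. (f has_real_derivative y) (at v) \<and> 0 \<le> y" if "\<bar>v\<bar> < \<beta>/2" for v
  proof -
    have "(f has_real_derivative L2 \<beta> v - exp (-\<beta>) * 1) (at v)"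
      unfolding f_def by (intro DERIV_diff L1_deriv[OF that] DERIV_cmult DERIV_ident)
    then show ?thesis using L2_lower[OF that] by auto
  qed
  have f0: "f 0 = 0" by (simp add: f_def L1_zero)
  show "u \<ge> 0 \<Longrightarrow> L1 \<beta> u \<ge> exp (-\<beta>) * u"
  proof -
    assume "u \<ge> 0"
    have "f 0 \<le> f u"
      by (rule DERIV_nonneg_imp_nondecreasing[OF \<open>u \<ge> 0\<close>]) (use fd assms in auto)
    then show ?thesis using f0 by (simp add: f_def)
  qed
  show "u \<le> 0 \<Longrightarrow> L1 \<beta> u \<le> exp (-\<beta>) * u"
  proof -
    assume "u \<le> 0"
    have "f u \<le> f 0"
      by (rule DERIV_nonneg_imp_nondecreasing[OF \<open>u \<le> 0\<close>]) (use fd assms in auto)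
    then show ?thesis using f0 by (simp add: f_def)
  qed
qed

lemma L1_sign:
  fixes \<beta> u :: real assumes "\<bar>u\<bar> < \<beta>/2" "\<beta> > 0"
  shows "u > 0 \<Longrightarrow> L1 \<beta> u > 0" "u < 0 \<Longrightarrow> L1 \<beta> u < 0" "u \<ge> 0 \<Longrightarrow> L1 \<beta> u \<ge> 0" "u \<le> 0 \<Longrightarrow> L1 \<beta> u \<le> 0"
proof -
  have p: "exp (-\<beta>) > 0" by simp
  show "u > 0 \<Longrightarrow> L1 \<beta> u > 0"
  proof - assume "u > 0" then have "exp (-\<beta>) * u > 0" using p by simp
    then show ?thesis using L1_lin(1)[OF assms(1)] \<open>u > 0\<close> by linarith qed
  show "u < 0 \<Longrightarrow> L1 \<beta> u < 0"
  proof - assume "u < 0" then have "exp (-\<beta>) * u < 0" using p by (simp add: mult_pos_neg)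
    then show ?thesis using L1_lin(2)[OF assms(1)] \<open>u < 0\<close> by linarith qed
  show "u \<ge> 0 \<Longrightarrow> L1 \<beta> u \<ge> 0"
  proof - assume "u \<ge> 0" then have "exp (-\<beta>) * u \<ge> 0" using p by simp
    then show ?thesis using L1_lin(1)[OF assms(1)] \<open>u \<ge> 0\<close> by linarith qed
  show "u \<le> 0 \<Longrightarrow> L1 \<beta> u \<le> 0"
  proof - assume "u \<le> 0" then have "exp (-\<beta>) * u \<le> 0" using p by (simp add: mult_nonneg_nonpos)
    then show ?thesis using L1_lin(2)[OF assms(1)] \<open>u \<le> 0\<close> by linarith qed
qed



lemma LD_simps: "LD \<beta> 0 = L0 \<beta>" "LD \<beta> 1 = L1 \<beta>" "LD \<beta> 2 = L2 \<beta>" "LD \<beta> 3 = L3 \<beta>" "LD \<beta> (Suc 0) = L1 \<beta>"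
  by (auto simp: LD_def fun_eq_iff)

lemma ftc01:
  fixes f f' :: "real \<Rightarrow> real"
  assumes "\<And>x. x \<in> {0..1} \<Longrightarrow> (f has_real_derivative f' x) (at x)"
  shows "(f' has_integral (f 1 - f 0)) {0..1}"
proof (rule fundamental_theorem_of_calculus)
  fix x :: real assume "x \<in> {0..1}"
  then show "(f has_vector_derivative f' x) (at x within {0..1})"
    using assms has_real_derivative_iff_has_vector_derivative has_vector_derivative_at_within by blast
qed simp

lemma poly_int1: "((\<lambda>x::real. (x - 1/2)^2) has_integral 1/12) {0..1}"
proof -
  have "((\<lambda>x::real. (x - 1/2)^2) has_integral ((\<lambda>x. (x - 1/2)^3/3) 1 - (\<lambda>x. (x - 1/2)^3/3) 0)) {0..1}"
    by (rule ftc01) (auto intro!: derivative_eq_intros simp: power2_eq_square)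
  then show ?thesis by (simp add: power3_eq_cube)
qed

lemma poly_int2: "((\<lambda>x::real. x^2) has_integral 1/3) {0..1}"
proof -
  have "((\<lambda>x::real. x^2) has_integral ((\<lambda>x. x^3/3) 1 - (\<lambda>x. x^3/3) 0)) {0..1}"
    by (rule ftc01) (auto intro!: derivative_eq_intros simp: power2_eq_square)
  then show ?thesis by simp
qed

lemma poly_int3: "((\<lambda>x::real. x * (1 - x)) has_integral 1/6) {0..1}"
proof -
  have "((\<lambda>x::real. x * (1 - x)) has_integral ((\<lambda>x. x^2/2 - x^3/3) 1 - (\<lambda>x. x^2/2 - x^3/3) 0)) {0..1}"
    by (rule ftc01) (auto intro!: derivative_eq_intros simp: power2_eq_square algebra_simps)
  then show ?thesis by simp
qed

lemma GI2_pos: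
  fixes \<beta> h :: real assumes "\<bar>h\<bar> < \<beta>"
  shows "GI \<beta> 2 h \<ge> exp (-\<beta>) / 12"
proof -
  have "integral {0..1} (\<lambda>x. exp (-\<beta>) * (x - 1/2)^2) \<le> GI \<beta> 2 h"
    unfolding GI_def
  proof (rule integral_le)
    show "(\<lambda>x. exp (-\<beta>) * (x - 1/2)^2) integrable_on {0..1}"
      using has_integral_mult_right[OF poly_int1] by blast
    show "(\<lambda>x. (x - 1/2)^2 * LD \<beta> 2 (h * (x - 1/2))) integrable_on {0..1}"
      by (rule intG[OF assms]) simp
  next
    fix x :: real assume "x \<in> {0..1}"
    then have "L2 \<beta> (h * (x - 1/2)) \<ge> exp (-\<beta>)" using L2_lower rangeG[OF assms] by blast
    from mult_right_mono[OF this, of "(x - 1/2)^2"]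
    show "exp (-\<beta>) * (x - 1/2)^2 \<le> (x - 1/2)^2 * LD \<beta> 2 (h * (x - 1/2))"
      by (simp add: LD_simps mult.commute)
  qed
  moreover have "integral {0..1} (\<lambda>x. exp (-\<beta>) * (x - 1/2)^2) = exp (-\<beta>) * (1/12)"
    using has_integral_mult_right[OF poly_int1] by (rule integral_unique)
  ultimately show ?thesis by linarith
qed

lemma HI2_pos:
  fixes \<beta> c s :: real assumes "\<bar>c\<bar> < \<beta>/2" "\<bar>s + c\<bar> < \<beta>/2"
  shows "HI \<beta> c 2 s \<ge> exp (-\<beta>) / 3"
proof -
  have "integral {0..1} (\<lambda>x. exp (-\<beta>) * x^2) \<le> HI \<beta> c 2 s"
    unfolding HI_def
  proof (rule integral_le)
    show "(\<lambda>x. exp (-\<beta>) * x^2) integrable_on {0..1}"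
      using has_integral_mult_right[OF poly_int2] by blast
    show "(\<lambda>x. x^2 * LD \<beta> 2 (s * x + c)) integrable_on {0..1}"
      by (rule intH[OF assms]) simp
  next
    fix x :: real assume "x \<in> {0..1}"
    then have "L2 \<beta> (s * x + c) \<ge> exp (-\<beta>)" using L2_lower rangeH[OF assms] by blast
    from mult_right_mono[OF this, of "x^2"]
    show "exp (-\<beta>) * x^2 \<le> x^2 * LD \<beta> 2 (s * x + c)"
      by (simp add: LD_simps mult.commute)
  qed
  moreover have "integral {0..1} (\<lambda>x. exp (-\<beta>) * x^2) = exp (-\<beta>) * (1/3)"
    using has_integral_mult_right[OF poly_int2] by (rule integral_unique)
  ultimately show ?thesis by linarith
qed

lemma GI_ident:
  fixes \<beta> h :: real assumes "\<bar>h\<bar> < \<beta>"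
  shows "h * GI \<beta> 2 h + 2 * GI \<beta> 1 h = L1 \<beta> (h/2) / 2"
proof -
  let ?f = "\<lambda>x. (x - 1/2)^2 * L1 \<beta> (h * (x - 1/2))"
  let ?f' = "\<lambda>x. 2 * ((x - 1/2)^1 * LD \<beta> 1 (h * (x - 1/2))) + h * ((x - 1/2)^2 * LD \<beta> 2 (h * (x - 1/2)))"
  have "(?f' has_integral (?f 1 - ?f 0)) {0..1}"
  proof (rule ftc01)
    fix x :: real assume x: "x \<in> {0..1}"
    have d: "((\<lambda>x. h * (x - 1/2)) has_real_derivative h * (1 - 0)) (at x)"
      by (intro DERIV_cmult DERIV_diff DERIV_ident DERIV_const)
    have l: "((\<lambda>x. L1 \<beta> (h * (x - 1/2))) has_real_derivative L2 \<beta> (h * (x - 1/2)) * (h * (1 - 0))) (at x)"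
      by (rule DERIV_chain2[OF L1_deriv[OF rangeG[OF assms x]] d])
    show "(?f has_real_derivative ?f' x) (at x)"
      apply (rule DERIV_cong)
       apply (rule DERIV_mult'[OF _ l])
       apply (rule DERIV_cong[OF DERIV_power[OF DERIV_diff[OF DERIV_ident DERIV_const]]])
       apply (rule refl)
      by (simp add: LD_simps algebra_simps power2_eq_square)
  qed
  moreover have "(?f' has_integral (2 * GI \<beta> 1 h + h * GI \<beta> 2 h)) {0..1}"
    unfolding GI_def
    by (intro has_integral_add has_integral_mult_right integrable_integral intG[OF assms]) auto
  ultimately have "?f 1 - ?f 0 = 2 * GI \<beta> 1 h + h * GI \<beta> 2 h"
    using has_integral_unique by blast
  moreover have "?f 1 - ?f 0 = L1 \<beta> (h/2) / 2"
    using L1_odd[of \<beta> "h/2"] by (simp add: power2_eq_square)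
  ultimately show ?thesis by simp
qed

lemma HI_ident:
  fixes \<beta> c s :: real assumes "\<bar>c\<bar> < \<beta>/2" "\<bar>s + c\<bar> < \<beta>/2"
  shows "s * HI \<beta> c 2 s + 2 * HI \<beta> c 1 s = L1 \<beta> (s + c)"
proof -
  let ?f = "\<lambda>x. x^2 * L1 \<beta> (s * x + c)"
  let ?f' = "\<lambda>x. 2 * (x^1 * LD \<beta> 1 (s * x + c)) + s * (x^2 * LD \<beta> 2 (s * x + c))"
  have "(?f' has_integral (?f 1 - ?f 0)) {0..1}"
  proof (rule ftc01)
    fix x :: real assume x: "x \<in> {0..1}"
    have d: "((\<lambda>x. s * x + c) has_real_derivative s * 1 + 0) (at x)"
      by (intro DERIV_add DERIV_cmult DERIV_ident DERIV_const)
    have l: "((\<lambda>x. L1 \<beta> (s * x + c)) has_real_derivative L2 \<beta> (s * x + c) * (s * 1 + 0)) (at x)"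
      by (rule DERIV_chain2[OF L1_deriv[OF rangeH[OF assms x]] d])
    show "(?f has_real_derivative ?f' x) (at x)"
      apply (rule DERIV_cong)
       apply (rule DERIV_mult'[OF _ l])
       apply (rule DERIV_cong[OF DERIV_power[OF DERIV_ident]])
       apply (rule refl)
      by (simp add: LD_simps algebra_simps power2_eq_square)
  qed
  moreover have "(?f' has_integral (2 * HI \<beta> c 1 s + s * HI \<beta> c 2 s)) {0..1}"
    unfolding HI_def
    by (intro has_integral_add has_integral_mult_right integrable_integral intH[OF assms]) auto
  ultimately have "?f 1 - ?f 0 = 2 * HI \<beta> c 1 s + s * HI \<beta> c 2 s"
    using has_integral_unique by blast
  then show ?thesis by simp
qed



lemma GG_eq:
  fixes \<beta> h :: real assumes "\<bar>h\<bar> < \<beta>"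
  shows "GG \<beta> h = GI \<beta> 0 h"
  unfolding GG_def GI_def
  by (rule integral_cong) (use rangeG[OF assms] LL_eq in \<open>auto simp: LD_simps\<close>)

lemma HH_eq:
  fixes \<beta> \<delta> s :: real assumes "\<bar>\<delta> - \<beta>/2\<bar> < \<beta>/2" "\<bar>s + (\<delta> - \<beta>/2)\<bar> < \<beta>/2"
  shows "HH \<beta> \<delta> s = HI \<beta> (\<delta> - \<beta>/2) 0 s"
  unfolding HH_def HI_def
proof (rule integral_cong)
  fix x :: real assume "x \<in> {0..1}"
  then have r: "\<bar>s * x + (\<delta> - \<beta>/2)\<bar> < \<beta>/2" using rangeH[OF assms] by blast
  have e: "s * x + \<delta> - \<beta>/2 = s * x + (\<delta> - \<beta>/2)" by simp
  show "LL \<beta> (s * x + \<delta> - \<beta> / 2) = x ^ 0 * LD \<beta> 0 (s * x + (\<delta> - \<beta> / 2))"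
    unfolding e LD_simps power_0 mult_1 by (rule LL_eq[OF r])
qed

lemma GG_deriv:
  fixes \<beta> h :: real assumes "\<bar>h\<bar> < \<beta>"
  shows "(GG \<beta> has_real_derivative GI \<beta> 1 h) (at h)" "deriv (GG \<beta>) h = GI \<beta> 1 h"
proof -
  have "(GI \<beta> 0 has_real_derivative GI \<beta> (Suc 0) h) (at h)" by (rule GI_deriv[OF assms]) simp
  then have "(GI \<beta> 0 has_real_derivative GI \<beta> 1 h) (at h)" by simp
  then show d: "(GG \<beta> has_real_derivative GI \<beta> 1 h) (at h)"
    by (rule has_field_derivative_transform_within_open[where S = "{-\<beta><..<\<beta>}"])
       (use assms GG_eq in \<open>auto simp: abs_less_iff\<close>)
  then show "deriv (GG \<beta>) h = GI \<beta> 1 h" by (rule DERIV_imp_deriv)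
qed

lemma HH_deriv:
  fixes \<beta> \<delta> s :: real assumes "\<bar>\<delta> - \<beta>/2\<bar> < \<beta>/2" "\<bar>s + (\<delta> - \<beta>/2)\<bar> < \<beta>/2"
  shows "(HH \<beta> \<delta> has_real_derivative HI \<beta> (\<delta> - \<beta>/2) 1 s) (at s)" "deriv (HH \<beta> \<delta>) s = HI \<beta> (\<delta> - \<beta>/2) 1 s"
proof -
  let ?c = "\<delta> - \<beta>/2"
  have "(HI \<beta> ?c 0 has_real_derivative HI \<beta> ?c (Suc 0) s) (at s)" by (rule HI_deriv[OF assms]) simp
  then have "(HI \<beta> ?c 0 has_real_derivative HI \<beta> ?c 1 s) (at s)" by simp
  then show d: "(HH \<beta> \<delta> has_real_derivative HI \<beta> ?c 1 s) (at s)"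
  proof (rule has_field_derivative_transform_within_open[where S = "{-\<beta>/2 - ?c<..<\<beta>/2 - ?c}"])
    show "open {-\<beta>/2 - ?c<..<\<beta>/2 - ?c}" by simp
    show "s \<in> {-\<beta>/2 - ?c<..<\<beta>/2 - ?c}" using assms(2) by (simp only: abs_less_iff greaterThanLessThan_iff) linarith
    fix x assume "x \<in> {-\<beta>/2 - ?c<..<\<beta>/2 - ?c}"
    then have "\<bar>x + ?c\<bar> < \<beta>/2" by (simp only: abs_less_iff greaterThanLessThan_iff) linarith
    then show "HI \<beta> ?c 0 x = HH \<beta> \<delta> x" using HH_eq[OF assms(1)] by simp
  qed
  then show "deriv (HH \<beta> \<delta>) s = HI \<beta> ?c 1 s" by (rule DERIV_imp_deriv)
qed

lemma GI1_zero: "GI \<beta> 1 0 = 0"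
  by (simp add: GI_def LD_simps L1_zero)

lemma GI1_strict_mono:
  fixes \<beta> h1 h2 :: real assumes "-\<beta> < h1" "h1 < h2" "h2 < \<beta>"
  shows "GI \<beta> 1 h1 < GI \<beta> 1 h2"
proof (rule DERIV_pos_imp_increasing[OF assms(2)])
  fix x assume "h1 \<le> x" "x \<le> h2"
  then have x: "\<bar>x\<bar> < \<beta>" using assms by (simp only: abs_less_iff) linarith
  have "(GI \<beta> 1 has_real_derivative GI \<beta> (Suc 1) x) (at x)" by (rule GI_deriv[OF x]) simp
  moreover have "GI \<beta> (Suc 1) x > 0"
    using GI2_pos[OF x] by (simp add: numeral_2_eq_2[symmetric]) (smt (verit) exp_gt_zero)
  ultimately show "\<exists>y. (GI \<beta> 1 has_real_derivative y) (at x) \<and> y > 0" by blast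
qed

lemma HI1_strict_mono:
  fixes \<beta> c s1 s2 :: real assumes "\<bar>c\<bar> < \<beta>/2" "-\<beta>/2 < s1 + c" "s1 < s2" "s2 + c < \<beta>/2"
  shows "HI \<beta> c 1 s1 < HI \<beta> c 1 s2"
proof (rule DERIV_pos_imp_increasing[OF assms(3)])
  fix x assume "s1 \<le> x" "x \<le> s2"
  then have x: "\<bar>x + c\<bar> < \<beta>/2" using assms by (simp only: abs_less_iff) linarith
  have "(HI \<beta> c 1 has_real_derivative HI \<beta> c (Suc 1) x) (at x)" by (rule HI_deriv[OF assms(1) x]) simp
  moreover have "HI \<beta> c (Suc 1) x > 0"
    using HI2_pos[OF assms(1) x] by (simp add: numeral_2_eq_2[symmetric]) (smt (verit) exp_gt_zero)
  ultimately show "\<exists>y. (HI \<beta> c 1 has_real_derivative y) (at x) \<and> y > 0" by blast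
qed

lemma log_integral:
  fixes P R h :: real assumes "0 < h" "h < R"
  shows "((\<lambda>x. (P / (R - h*x) - 1) / h) has_integral ((P/h^2) * ln (R/(R-h)) - 1/h)) {0..1}"
proof -
  let ?A = "\<lambda>x. -(P/h^2) * ln (R - h*x) - x/h"
  have I: "((\<lambda>x. (P / (R - h*x) - 1) / h) has_integral (?A 1 - ?A 0)) {0..1}"
  proof (rule ftc01)
    fix x :: real assume "x \<in> {0..1}"
    then have "h * x \<le> h" using assms by (simp add: mult_left_le)
    then have pos: "0 < R - h * x" using assms by linarith
    have d1: "((\<lambda>x. R - h*x) has_real_derivative 0 - h * 1) (at x)"
      by (intro DERIV_diff DERIV_const DERIV_cmult DERIV_ident)
    have d2: "((\<lambda>x. ln (R - h*x)) has_real_derivative (1 / (R - h*x)) * (0 - h * 1)) (at x)"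
      by (rule DERIV_chain2[OF DERIV_ln_divide[OF pos] d1])
    have "(?A has_real_derivative -(P/h^2) * ((1 / (R - h*x)) * (0 - h * 1)) - 1/h) (at x)"
    proof -
      have "((\<lambda>x. x/h) has_real_derivative 1/h) (at x)"
        using DERIV_cdivide[OF DERIV_ident, of h x] by simp
      then show ?thesis by (intro DERIV_diff DERIV_cmult d2)
    qed
    moreover have "-(P/h^2) * ((1 / (R - h*x)) * (0 - h * 1)) - 1/h = (P / (R - h*x) - 1) / h"
      using assms pos by (simp add: field_simps power2_eq_square)
    ultimately show "(?A has_real_derivative (P / (R - h*x) - 1) / h) (at x)" by simp
  qed
  moreover have eq: "?A 1 - ?A 0 = (P/h^2) * ln (R/(R-h)) - 1/h"
    using assms by (simp add: ln_div field_simps)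
  show ?thesis using I unfolding eq .
qed



lemma G_pointwise:
  fixes \<beta> h x :: real assumes "0 < h" "h < \<beta>" "x \<in> {0..1}"
  shows "(x - 1/2)^1 * LD \<beta> 1 (h * (x - 1/2)) \<ge> exp (-\<beta>) * (((\<beta>/2) / ((\<beta>/2 + h/2) - h * x) - 1) / h) - gg \<beta> 0 / 2"
proof -
  define y where "y = x - 1/2"
  define u where "u = h * y"
  have hb: "\<bar>h\<bar> < \<beta>" using assms by simp
  have u: "\<bar>u\<bar> < \<beta>/2" unfolding u_def y_def by (rule rangeG[OF hb assms(3)])
  have bu: "\<beta>/2 - u > 0" using u by (simp only: abs_less_iff) linarith
  have y: "y \<le> 1/2" "-1/2 \<le> y" using assms(3) by (auto simp: y_def)
  have idt: "((\<beta>/2) / ((\<beta>/2 + h/2) - h * x) - 1) / h = y / (\<beta>/2 - u)"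
  proof -
    have eq: "(\<beta>/2 + h/2) - h * x = \<beta>/2 - u" by (simp add: u_def y_def algebra_simps)
    have e2: "(\<beta>/2) / (\<beta>/2 - u) - 1 = u / (\<beta>/2 - u)" using bu by (simp add: field_simps)
    have e3: "u / (\<beta>/2 - u) / h = y / (\<beta>/2 - u)" using assms(1) by (simp add: u_def)
    show ?thesis unfolding eq e2 e3 ..
  qed
  have g0: "gg \<beta> 0 > 0" using gg_pos[of 0 \<beta>] assms by simp
  show ?thesis
  proof (cases "y \<ge> 0")
    case True
    then have u0: "u \<ge> 0" using assms(1) by (simp add: u_def)
    have l1: "gg \<beta> u \<ge> exp (-\<beta>) / (\<beta>/2 - u)" by (rule gg_lower) (use u in \<open>simp_all only: abs_less_iff, linarith+\<close>)
    have l2: "gg \<beta> (-u) \<le> gg \<beta> 0" by (rule gg_mono) (use u0 assms in auto)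
    have "L1 \<beta> u \<ge> exp (-\<beta>) / (\<beta>/2 - u) - gg \<beta> 0" unfolding L1_def using l1 l2 by linarith
    then have "y * L1 \<beta> u \<ge> y * (exp (-\<beta>) / (\<beta>/2 - u) - gg \<beta> 0)" using True by (rule mult_left_mono)
    moreover have "y * gg \<beta> 0 \<le> gg \<beta> 0 / 2" using y g0 by (simp add: mult_right_mono[of y "1/2" "gg \<beta> 0", simplified])
    moreover have "y * (exp (-\<beta>) / (\<beta>/2 - u) - gg \<beta> 0) = exp (-\<beta>) * (y / (\<beta>/2 - u)) - y * gg \<beta> 0"
      by (simp add: algebra_simps)
    ultimately have "y * L1 \<beta> u \<ge> exp (-\<beta>) * (y / (\<beta>/2 - u)) - gg \<beta> 0 / 2" by linarith
    then show ?thesis unfolding idt by (simp add: LD_simps u_def y_def)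
  next
    case False
    then have u0: "u \<le> 0" using assms(1) unfolding u_def by (intro mult_nonneg_nonpos) auto
    have "L1 \<beta> u \<le> 0" by (rule L1_sign(4)[OF u _ u0]) (use assms in simp)
    then have a: "y * L1 \<beta> u \<ge> 0" using False by (simp add: mult_nonpos_nonpos)
    have "y / (\<beta>/2 - u) \<le> 0" using False bu by (simp add: divide_nonpos_pos)
    then have "exp (-\<beta>) * (y / (\<beta>/2 - u)) \<le> 0" by (intro mult_nonneg_nonpos) auto
    then have "y * L1 \<beta> u \<ge> exp (-\<beta>) * (y / (\<beta>/2 - u)) - gg \<beta> 0 / 2" using a g0 by linarith
    then show ?thesis unfolding idt by (simp add: LD_simps u_def y_def)
  qed
qed

lemma GI1_lower:
  fixes \<beta> h :: real assumes "0 < h" "h < \<beta>"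
  shows "GI \<beta> 1 h \<ge> exp (-\<beta>) * (((\<beta>/2)/h^2) * ln ((\<beta>/2 + h/2)/((\<beta>/2 + h/2) - h)) - 1/h) - gg \<beta> 0 / 2"
proof -
  have hb: "\<bar>h\<bar> < \<beta>" using assms by simp
  have C: "((\<lambda>x. gg \<beta> 0 / 2) has_integral (gg \<beta> 0 / 2)) {0..1::real}"
    using has_integral_const_real[of "gg \<beta> 0 / 2" 0 1] by simp
  have I: "((\<lambda>x. exp (-\<beta>) * (((\<beta>/2) / ((\<beta>/2 + h/2) - h * x) - 1) / h) - gg \<beta> 0 / 2) has_integral
      (exp (-\<beta>) * (((\<beta>/2)/h^2) * ln ((\<beta>/2 + h/2)/((\<beta>/2 + h/2) - h)) - 1/h) - (gg \<beta> 0 / 2))) {0..1}"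
    by (intro has_integral_diff has_integral_mult_right log_integral C) (use assms in auto)
  have J: "((\<lambda>x. (x - 1/2)^1 * LD \<beta> 1 (h * (x - 1/2))) has_integral GI \<beta> 1 h) {0..1}"
    unfolding GI_def by (rule integrable_integral[OF intG[OF hb]]) simp
  show ?thesis
    by (rule has_integral_le[OF I J]) (rule G_pointwise[OF assms])
qed

lemma exp_neg_small: fixes M :: real assumes "M \<ge> 1" shows "exp (-M) \<le> 1/2" "0 < exp (-M)"
proof -
  have "1 + 1 \<le> exp (1::real)" by (rule exp_ge_add_one_self)
  then have "exp (-1::real) \<le> 1/2" by (simp add: exp_minus divide_simps)
  moreover have "exp (-M) \<le> exp (-1)" using assms by simp
  ultimately show "exp (-M) \<le> 1/2" by linarith
  show "0 < exp (-M)" by simp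
qed

lemma G_choice:
  fixes \<beta> M h :: real assumes "\<beta> > 0" "M \<ge> 1" "h = \<beta> * (1 - exp (-M))"
  shows "0 < h" "h < \<beta>" "((\<beta>/2)/h^2) * ln ((\<beta>/2 + h/2)/((\<beta>/2 + h/2) - h)) - 1/h \<ge> M / (2*\<beta>) - 2/\<beta>"
proof -
  have em: "exp (-M) \<le> 1/2" "0 < exp (-M)" using exp_neg_small[OF assms(2)] by auto
  show h0: "0 < h" using assms em by simp
  show h1: "h < \<beta>" using assms em by simp
  have "\<beta> * exp (-M) \<le> \<beta> * (1/2)" using assms em by (intro mult_left_mono) auto
  moreover have "h = \<beta> - \<beta> * exp (-M)" using assms by (simp add: algebra_simps)
  ultimately have h2: "h \<ge> \<beta>/2" by linarith
  have d: "(\<beta>/2 + h/2) - h = (\<beta>/2) * exp (-M)" using assms by (simp add: algebra_simps)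
  have "(\<beta>/2) / ((\<beta>/2) * exp (-M)) = 1 / exp (-M)" using assms by simp
  also have "\<dots> = exp M" unfolding exp_minus' by simp
  finally have "(\<beta>/2) / ((\<beta>/2) * exp (-M)) = exp M" .
  moreover have "(\<beta>/2) / ((\<beta>/2) * exp (-M)) \<le> (\<beta>/2 + h/2) / ((\<beta>/2) * exp (-M))"
    using assms em h0 by (intro divide_right_mono) auto
  ultimately have r: "exp M \<le> (\<beta>/2 + h/2)/((\<beta>/2 + h/2) - h)" unfolding d by simp
  have rp: "0 < (\<beta>/2 + h/2)/((\<beta>/2 + h/2) - h)" unfolding d using assms(1) em h0
    by (intro divide_pos_pos mult_pos_pos) auto
  have lnM: "M \<le> ln ((\<beta>/2 + h/2)/((\<beta>/2 + h/2) - h))" using r rp by (simp add: ln_ge_iff)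
  have "h^2 \<le> \<beta>^2" using h0 h1 by (intro power_mono) auto
  then have "(\<beta>/2)/\<beta>^2 \<le> (\<beta>/2)/h^2" using assms h0 by (intro divide_left_mono) auto
  moreover have "(\<beta>/2)/\<beta>^2 = 1/(2*\<beta>)" using assms by (simp add: power2_eq_square)
  ultimately have c1: "1/(2*\<beta>) \<le> (\<beta>/2)/h^2" by simp
  have A: "1/(2*\<beta>) * M \<le> ((\<beta>/2)/h^2) * ln ((\<beta>/2 + h/2)/((\<beta>/2 + h/2) - h))"
    by (rule mult_mono[OF c1 lnM]) (use assms in auto)
  have B: "1/h \<le> 1/(\<beta>/2)" using h2 assms(1) h0 by (intro divide_left_mono) auto
  have "M / (2*\<beta>) - 2/\<beta> = 1/(2*\<beta>) * M - 1/(\<beta>/2)" by simp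
  also have "\<dots> \<le> ((\<beta>/2)/h^2) * ln ((\<beta>/2 + h/2)/((\<beta>/2 + h/2) - h)) - 1/h"
    by (rule diff_mono[OF A B])
  finally show "((\<beta>/2)/h^2) * ln ((\<beta>/2 + h/2)/((\<beta>/2 + h/2) - h)) - 1/h \<ge> M / (2*\<beta>) - 2/\<beta>" .
qed

lemma GI1_unbounded:
  fixes \<beta> Q :: real assumes "\<beta> > 0"
  shows "\<exists>h. 0 < h \<and> h < \<beta> \<and> Q \<le> GI \<beta> 1 h"
proof -
  define e where "e = exp (-\<beta>)"
  define K where "K = gg \<beta> 0 / 2"
  have e: "e > 0" by (simp add: e_def)
  have K: "K > 0" using gg_pos[of 0 \<beta>] assms by (simp add: K_def)
  define M where "M = 5 + 2 * \<beta> * (\<bar>Q\<bar> + K) / e"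
  have M1: "M \<ge> 1" using e K assms by (simp add: M_def)
  define h where "h = \<beta> * (1 - exp (-M))"
  note ch = G_choice[OF assms M1 h_def]
  have "GI \<beta> 1 h \<ge> e * (((\<beta>/2)/h^2) * ln ((\<beta>/2 + h/2)/((\<beta>/2 + h/2) - h)) - 1/h) - K"
    using GI1_lower[OF ch(1,2)] by (simp add: e_def K_def)
  moreover have "e * (M / (2*\<beta>) - 2/\<beta>) \<le> e * (((\<beta>/2)/h^2) * ln ((\<beta>/2 + h/2)/((\<beta>/2 + h/2) - h)) - 1/h)"
    using ch(3) e by (intro mult_left_mono) auto
  moreover have "e * (M / (2*\<beta>) - 2/\<beta>) = e / (2*\<beta>) + \<bar>Q\<bar> + K"
    using e assms by (simp add: M_def field_simps)
  moreover have "e / (2*\<beta>) > 0" using e assms by simp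
  ultimately have "Q \<le> GI \<beta> 1 h" by linarith
  then show ?thesis using ch by blast
qed



lemma H_pointwise_up:
  fixes \<beta> c s x :: real assumes "\<bar>c\<bar> < \<beta>/2" "0 < s" "s < \<beta>/2 - c" "x \<in> {0..1}"
  shows "x^1 * LD \<beta> 1 (s * x + c) \<ge> exp (-\<beta>) * (((\<beta>/2 - c) / ((\<beta>/2 - c) - s * x) - 1) / s) - gg \<beta> (-c)"
proof -
  define u where "u = s * x + c"
  have sc: "\<bar>s + c\<bar> < \<beta>/2" using assms(1,2,3) by (simp only: abs_less_iff; linarith?)
  have u: "\<bar>u\<bar> < \<beta>/2" unfolding u_def by (rule rangeH[OF assms(1) sc assms(4)])
  have bu: "\<beta>/2 - u > 0" using u by (simp only: abs_less_iff; linarith?)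
  have x: "0 \<le> x" "x \<le> 1" using assms(4) by auto
  have uc: "c \<le> u" using assms(2) x by (simp add: u_def)
  have idt: "((\<beta>/2 - c) / ((\<beta>/2 - c) - s * x) - 1) / s = x / (\<beta>/2 - u)"
  proof -
    have eq: "(\<beta>/2 - c) - s * x = \<beta>/2 - u" by (simp add: u_def algebra_simps)
    have e2: "(\<beta>/2 - c) / (\<beta>/2 - u) - 1 = (s * x) / (\<beta>/2 - u)" using bu by (simp add: field_simps u_def)
    have e3: "(s * x) / (\<beta>/2 - u) / s = x / (\<beta>/2 - u)" using assms(2) by simp
    show ?thesis unfolding eq e2 e3 ..
  qed
  have gc: "gg \<beta> (-c) > 0" using gg_pos[of "-c" \<beta>] assms(1) by (simp only: abs_less_iff; linarith?)
  have l1: "gg \<beta> u \<ge> exp (-\<beta>) / (\<beta>/2 - u)" by (rule gg_lower) (use u in \<open>simp_all only: abs_less_iff, linarith+\<close>)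
  have cb: "-c < \<beta>/2" using assms(1) by (simp only: abs_less_iff; linarith?)
  have l2: "gg \<beta> (-u) \<le> gg \<beta> (-c)" using uc cb by (intro gg_mono) linarith+
  have "L1 \<beta> u \<ge> exp (-\<beta>) / (\<beta>/2 - u) - gg \<beta> (-c)" unfolding L1_def using l1 l2 by linarith
  then have "x * L1 \<beta> u \<ge> x * (exp (-\<beta>) / (\<beta>/2 - u) - gg \<beta> (-c))" using x(1) by (rule mult_left_mono)
  moreover have "x * gg \<beta> (-c) \<le> gg \<beta> (-c)" using x gc by (simp add: mult_left_le_one_le)
  moreover have "x * (exp (-\<beta>) / (\<beta>/2 - u) - gg \<beta> (-c)) = exp (-\<beta>) * (x / (\<beta>/2 - u)) - x * gg \<beta> (-c)"
    by (simp add: algebra_simps)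
  ultimately have "x * L1 \<beta> u \<ge> exp (-\<beta>) * (x / (\<beta>/2 - u)) - gg \<beta> (-c)" by linarith
  then show ?thesis unfolding idt by (simp add: LD_simps u_def)
qed

lemma H_pointwise_low:
  fixes \<beta> c t x :: real assumes "\<bar>c\<bar> < \<beta>/2" "0 < t" "t < \<beta>/2 + c" "x \<in> {0..1}"
  shows "x^1 * LD \<beta> 1 ((-t) * x + c) \<le> gg \<beta> c - exp (-\<beta>) * (((\<beta>/2 + c) / ((\<beta>/2 + c) - t * x) - 1) / t)"
proof -
  define u where "u = (-t) * x + c"
  have sc: "\<bar>(-t) + c\<bar> < \<beta>/2" using assms(1,2,3) by (simp only: abs_less_iff; linarith?)
  have u: "\<bar>u\<bar> < \<beta>/2" unfolding u_def by (rule rangeH[OF assms(1) sc assms(4)])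
  have bu: "\<beta>/2 + u > 0" using u by (simp only: abs_less_iff; linarith?)
  have x: "0 \<le> x" "x \<le> 1" using assms(4) by auto
  have uc: "u \<le> c" using assms(2) x by (simp add: u_def)
  have idt: "((\<beta>/2 + c) / ((\<beta>/2 + c) - t * x) - 1) / t = x / (\<beta>/2 + u)"
  proof -
    have eq: "(\<beta>/2 + c) - t * x = \<beta>/2 + u" by (simp add: u_def algebra_simps)
    have e2: "(\<beta>/2 + c) / (\<beta>/2 + u) - 1 = (t * x) / (\<beta>/2 + u)" using bu by (simp add: field_simps u_def)
    have e3: "(t * x) / (\<beta>/2 + u) / t = x / (\<beta>/2 + u)" using assms(2) by simp
    show ?thesis unfolding eq e2 e3 ..
  qed
  have gc: "gg \<beta> c > 0" using gg_pos[of c \<beta>] assms(1) by (simp only: abs_less_iff; linarith?)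
  have l1: "gg \<beta> (-u) \<ge> exp (-\<beta>) / (\<beta>/2 - (-u))" by (rule gg_lower) (use u in \<open>simp_all only: abs_less_iff, linarith+\<close>)
  have cb: "c < \<beta>/2" using assms(1) by (simp only: abs_less_iff; linarith?)
  have l2: "gg \<beta> u \<le> gg \<beta> c" using uc cb by (intro gg_mono) linarith+
  have "\<beta>/2 - (-u) = \<beta>/2 + u" by simp
  then have l1': "exp (-\<beta>) / (\<beta>/2 + u) \<le> gg \<beta> (-u)" using l1 by simp
  have "L1 \<beta> u \<le> gg \<beta> c - exp (-\<beta>) / (\<beta>/2 + u)" unfolding L1_def using l1' l2 by linarith
  then have "x * L1 \<beta> u \<le> x * (gg \<beta> c - exp (-\<beta>) / (\<beta>/2 + u))" using x(1) by (rule mult_left_mono)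
  moreover have "x * gg \<beta> c \<le> gg \<beta> c" using x gc by (simp add: mult_left_le_one_le)
  moreover have "x * (gg \<beta> c - exp (-\<beta>) / (\<beta>/2 + u)) = x * gg \<beta> c - exp (-\<beta>) * (x / (\<beta>/2 + u))"
    by (simp add: algebra_simps)
  ultimately have "x * L1 \<beta> u \<le> gg \<beta> c - exp (-\<beta>) * (x / (\<beta>/2 + u))" by linarith
  then show ?thesis unfolding idt by (simp add: LD_simps u_def)
qed

lemma H_choice:
  fixes R M t :: real assumes "R > 0" "M \<ge> 1" "t = R * (1 - exp (-M))"
  shows "0 < t" "t < R" "(R/t^2) * ln (R/(R - t)) - 1/t \<ge> M / R - 2/R"
proof -
  have em: "exp (-M) \<le> 1/2" "0 < exp (-M)" using exp_neg_small[OF assms(2)] by auto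
  show h0: "0 < t" using assms em by simp
  show h1: "t < R" using assms em by simp
  have "R * exp (-M) \<le> R * (1/2)" using assms em by (intro mult_left_mono) auto
  moreover have "t = R - R * exp (-M)" using assms by (simp add: algebra_simps)
  ultimately have h2: "t \<ge> R/2" by linarith
  have d: "R - t = R * exp (-M)" using assms by (simp add: algebra_simps)
  have "R / (R * exp (-M)) = 1 / exp (-M)" using assms by simp
  also have "\<dots> = exp M" unfolding exp_minus' by simp
  finally have lnM: "ln (R/(R - t)) = M" unfolding d by simp
  have "t^2 \<le> R^2" using h0 h1 by (intro power_mono) auto
  then have "R/R^2 \<le> R/t^2" using assms h0 by (intro divide_left_mono) auto
  moreover have "R/R^2 = 1/R" using assms by (simp add: power2_eq_square)
  ultimately have c1: "1/R \<le> R/t^2" by simp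
  have A: "1/R * M \<le> (R/t^2) * ln (R/(R - t))"
    unfolding lnM by (rule mult_right_mono[OF c1]) (use assms in auto)
  have B: "1/t \<le> 1/(R/2)" using h2 assms(1) h0 by (intro divide_left_mono) auto
  have "M / R - 2/R = 1/R * M - 1/(R/2)" by simp
  also have "\<dots> \<le> (R/t^2) * ln (R/(R - t)) - 1/t"
    by (rule diff_mono[OF A B])
  finally show "(R/t^2) * ln (R/(R - t)) - 1/t \<ge> M / R - 2/R" .
qed

lemma HI1_lower:
  fixes \<beta> c s :: real assumes "\<bar>c\<bar> < \<beta>/2" "0 < s" "s < \<beta>/2 - c"
  shows "HI \<beta> c 1 s \<ge> exp (-\<beta>) * (((\<beta>/2 - c)/s^2) * ln ((\<beta>/2 - c)/((\<beta>/2 - c) - s)) - 1/s) - gg \<beta> (-c)"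
proof -
  have sc: "\<bar>s + c\<bar> < \<beta>/2" using assms by (simp only: abs_less_iff; linarith?)
  have C: "((\<lambda>x. gg \<beta> (-c)) has_integral (gg \<beta> (-c))) {0..1::real}"
    using has_integral_const_real[of "gg \<beta> (-c)" 0 1] by simp
  have I: "((\<lambda>x. exp (-\<beta>) * (((\<beta>/2 - c) / ((\<beta>/2 - c) - s * x) - 1) / s) - gg \<beta> (-c)) has_integral
      (exp (-\<beta>) * (((\<beta>/2 - c)/s^2) * ln ((\<beta>/2 - c)/((\<beta>/2 - c) - s)) - 1/s) - gg \<beta> (-c))) {0..1}"
    by (intro has_integral_diff has_integral_mult_right log_integral C) (use assms in auto)
  have J: "((\<lambda>x. x^1 * LD \<beta> 1 (s * x + c)) has_integral HI \<beta> c 1 s) {0..1}"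
    unfolding HI_def by (rule integrable_integral[OF intH[OF assms(1) sc]]) simp
  show ?thesis
    by (rule has_integral_le[OF I J]) (rule H_pointwise_up[OF assms])
qed

lemma HI1_upper:
  fixes \<beta> c t :: real assumes "\<bar>c\<bar> < \<beta>/2" "0 < t" "t < \<beta>/2 + c"
  shows "HI \<beta> c 1 (-t) \<le> gg \<beta> c - exp (-\<beta>) * (((\<beta>/2 + c)/t^2) * ln ((\<beta>/2 + c)/((\<beta>/2 + c) - t)) - 1/t)"
proof -
  have sc: "\<bar>(-t) + c\<bar> < \<beta>/2" using assms by (simp only: abs_less_iff; linarith?)
  have C: "((\<lambda>x. gg \<beta> c) has_integral (gg \<beta> c)) {0..1::real}"
    using has_integral_const_real[of "gg \<beta> c" 0 1] by simp
  have I: "((\<lambda>x. gg \<beta> c - exp (-\<beta>) * (((\<beta>/2 + c) / ((\<beta>/2 + c) - t * x) - 1) / t)) has_integral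
      (gg \<beta> c - exp (-\<beta>) * (((\<beta>/2 + c)/t^2) * ln ((\<beta>/2 + c)/((\<beta>/2 + c) - t)) - 1/t))) {0..1}"
    by (intro has_integral_diff has_integral_mult_right log_integral C) (use assms in auto)
  have J: "((\<lambda>x. x^1 * LD \<beta> 1 ((-t) * x + c)) has_integral HI \<beta> c 1 (-t)) {0..1}"
    unfolding HI_def by (rule integrable_integral[OF intH[OF assms(1) sc]]) simp
  show ?thesis
    by (rule has_integral_le[OF J I]) (rule H_pointwise_low[OF assms])
qed

lemma HI1_unbounded_up:
  fixes \<beta> c Q :: real assumes "\<bar>c\<bar> < \<beta>/2"
  shows "\<exists>s. 0 < s \<and> s < \<beta>/2 - c \<and> Q \<le> HI \<beta> c 1 s"
proof -
  define R where "R = \<beta>/2 - c"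
  have R: "R > 0" using assms unfolding R_def by (simp only: abs_less_iff; linarith?)
  define e where "e = exp (-\<beta>)"
  define K where "K = gg \<beta> (-c)"
  have e: "e > 0" by (simp add: e_def)
  have K: "K > 0" using gg_pos[of "-c" \<beta>] assms unfolding K_def by (simp only: abs_less_iff; linarith?)
  define M where "M = 3 + R * (\<bar>Q\<bar> + K) / e"
  have M1: "M \<ge> 1" using e K R by (simp add: M_def)
  define s where "s = R * (1 - exp (-M))"
  note ch = H_choice[OF R M1 s_def]
  have sR: "s < \<beta>/2 - c" using ch(2) by (simp add: R_def)
  have "HI \<beta> c 1 s \<ge> e * ((R/s^2) * ln (R/(R - s)) - 1/s) - K"
    using HI1_lower[OF assms ch(1) sR] by (simp add: e_def K_def R_def)
  moreover have "e * (M / R - 2/R) \<le> e * ((R/s^2) * ln (R/(R - s)) - 1/s)"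
    using ch(3) e by (intro mult_left_mono) auto
  moreover have "e * (M / R - 2/R) = e / R + \<bar>Q\<bar> + K"
    using e R by (simp add: M_def field_simps)
  moreover have "e / R > 0" using e R by simp
  ultimately have "Q \<le> HI \<beta> c 1 s" by linarith
  then show ?thesis using ch(1) sR by blast
qed

lemma HI1_unbounded_low:
  fixes \<beta> c Q :: real assumes "\<bar>c\<bar> < \<beta>/2"
  shows "\<exists>t. 0 < t \<and> t < \<beta>/2 + c \<and> HI \<beta> c 1 (-t) \<le> Q"
proof -
  define R where "R = \<beta>/2 + c"
  have R: "R > 0" using assms unfolding R_def by (simp only: abs_less_iff; linarith?)
  define e where "e = exp (-\<beta>)"
  define K where "K = gg \<beta> c"
  have e: "e > 0" by (simp add: e_def)
  have K: "K > 0" using gg_pos[of c \<beta>] assms unfolding K_def by (simp only: abs_less_iff; linarith?)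
  define M where "M = 3 + R * (\<bar>Q\<bar> + K) / e"
  have M1: "M \<ge> 1" using e K R by (simp add: M_def)
  define t where "t = R * (1 - exp (-M))"
  note ch = H_choice[OF R M1 t_def]
  have tR: "t < \<beta>/2 + c" using ch(2) by (simp add: R_def)
  have "HI \<beta> c 1 (-t) \<le> K - e * ((R/t^2) * ln (R/(R - t)) - 1/t)"
    using HI1_upper[OF assms ch(1) tR] by (simp add: e_def K_def R_def)
  moreover have "e * (M / R - 2/R) \<le> e * ((R/t^2) * ln (R/(R - t)) - 1/t)"
    using ch(3) e by (intro mult_left_mono) auto
  moreover have "e * (M / R - 2/R) = e / R + \<bar>Q\<bar> + K"
    using e R by (simp add: M_def field_simps)
  moreover have "e / R > 0" using e R by simp
  ultimately have "HI \<beta> c 1 (-t) \<le> Q" by linarith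
  then show ?thesis using ch(1) tR by blast
qed



lemma GI_deriv1:
  fixes \<beta> h :: real assumes "\<bar>h\<bar> < \<beta>"
  shows "(GI \<beta> 0 has_real_derivative GI \<beta> 1 h) (at h)" "(GI \<beta> 1 has_real_derivative GI \<beta> 2 h) (at h)"
    "(GI \<beta> 2 has_real_derivative GI \<beta> 3 h) (at h)"
  using GI_deriv[OF assms, of 0] GI_deriv[OF assms, of 1] GI_deriv[OF assms, of 2]
  by (simp_all add: numeral_2_eq_2 numeral_3_eq_3)

lemma HI_deriv1:
  fixes \<beta> c s :: real assumes "\<bar>c\<bar> < \<beta>/2" "\<bar>s + c\<bar> < \<beta>/2"
  shows "(HI \<beta> c 0 has_real_derivative HI \<beta> c 1 s) (at s)" "(HI \<beta> c 1 has_real_derivative HI \<beta> c 2 s) (at s)"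
    "(HI \<beta> c 2 has_real_derivative HI \<beta> c 3 s) (at s)"
  using HI_deriv[OF assms, of 0] HI_deriv[OF assms, of 1] HI_deriv[OF assms, of 2]
  by (simp_all add: numeral_2_eq_2 numeral_3_eq_3)

lemma GI1_inj:
  fixes \<beta> h1 h2 :: real assumes "\<bar>h1\<bar> < \<beta>" "\<bar>h2\<bar> < \<beta>" "GI \<beta> 1 h1 = GI \<beta> 1 h2"
  shows "h1 = h2"
proof -
  have a: "-\<beta> < h1" "h1 < \<beta>" "-\<beta> < h2" "h2 < \<beta>" using assms(1,2) by (simp_all only: abs_less_iff; linarith?)+
  show ?thesis
  proof (rule ccontr)
    assume "h1 \<noteq> h2"
    then consider "h1 < h2" | "h2 < h1" by linarith
    then show False
    proof cases
      case 1 then show False using GI1_strict_mono[OF a(1) 1 a(4)] assms(3) by simp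
    next
      case 2 then show False using GI1_strict_mono[OF a(3) 2 a(2)] assms(3) by simp
    qed
  qed
qed

lemma HI1_inj:
  fixes \<beta> c s1 s2 :: real assumes "\<bar>c\<bar> < \<beta>/2" "\<bar>s1 + c\<bar> < \<beta>/2" "\<bar>s2 + c\<bar> < \<beta>/2" "HI \<beta> c 1 s1 = HI \<beta> c 1 s2"
  shows "s1 = s2"
proof -
  have a: "-\<beta>/2 < s1 + c" "s1 + c < \<beta>/2" "-\<beta>/2 < s2 + c" "s2 + c < \<beta>/2" using assms(2,3) by (simp_all only: abs_less_iff; linarith?)+
  show ?thesis
  proof (rule ccontr)
    assume "s1 \<noteq> s2"
    then consider "s1 < s2" | "s2 < s1" by linarith
    then show False
    proof cases
      case 1 then show False using HI1_strict_mono[OF assms(1) a(1) 1 a(4)] assms(4) by simp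
    next
      case 2 then show False using HI1_strict_mono[OF assms(1) a(3) 2 a(2)] assms(4) by simp
    qed
  qed
qed

lemma htilde_eq:
  fixes \<beta> h q :: real assumes "0 \<le> h" "h < \<beta>" "GI \<beta> 1 h = q"
  shows "htilde \<beta> q = h"
  unfolding htilde_def
proof (rule the_equality)
  have hb: "\<bar>h\<bar> < \<beta>" using assms by simp
  show "0 \<le> h \<and> h < \<beta> \<and> deriv (GG \<beta>) h = q" using assms GG_deriv(2)[OF hb] by simp
  fix h' assume "0 \<le> h' \<and> h' < \<beta> \<and> deriv (GG \<beta>) h' = q"
  then have h': "\<bar>h'\<bar> < \<beta>" "deriv (GG \<beta>) h' = q" by auto
  then have "GI \<beta> 1 h' = GI \<beta> 1 h" using GG_deriv(2)[OF h'(1)] assms(3) by simp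
  then show "h' = h" by (rule GI1_inj[OF h'(1) hb])
qed

lemma sdelta_eq:
  fixes \<beta> \<delta> s q :: real assumes "0 < \<delta>" "\<delta> < \<beta>" "-\<delta> < s" "s < \<beta> - \<delta>" "HI \<beta> (\<delta> - \<beta>/2) 1 s = q"
  shows "sdelta \<beta> \<delta> q = s"
  unfolding sdelta_def
proof (rule the_equality)
  have c: "\<bar>\<delta> - \<beta>/2\<bar> < \<beta>/2" using assms(1,2) by (simp only: abs_less_iff; linarith?)
  have sc: "\<bar>s + (\<delta> - \<beta>/2)\<bar> < \<beta>/2" using assms(3,4) by (simp only: abs_less_iff; linarith?)
  show "-\<delta> < s \<and> s < \<beta> - \<delta> \<and> deriv (HH \<beta> \<delta>) s = q" using assms HH_deriv(2)[OF c sc] by simp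
  fix s' assume "-\<delta> < s' \<and> s' < \<beta> - \<delta> \<and> deriv (HH \<beta> \<delta>) s' = q"
  then have s': "-\<delta> < s'" "s' < \<beta> - \<delta>" "deriv (HH \<beta> \<delta>) s' = q" by auto
  have sc': "\<bar>s' + (\<delta> - \<beta>/2)\<bar> < \<beta>/2" using s'(1,2) by (simp only: abs_less_iff; linarith?)
  have "HI \<beta> (\<delta> - \<beta>/2) 1 s' = HI \<beta> (\<delta> - \<beta>/2) 1 s" using HH_deriv(2)[OF c sc'] s'(3) assms(5) by simp
  then show "s' = s" by (rule HI1_inj[OF c sc' sc])
qed

lemma GI1_cont:
  fixes \<beta> a b :: real assumes "-\<beta> < a" "b < \<beta>"
  shows "continuous_on {a..b} (GI \<beta> 1)"
proof (rule continuous_at_imp_continuous_on, safe)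
  fix x assume "x \<in> {a..b}"
  then have "\<bar>x\<bar> < \<beta>" using assms by (simp only: abs_less_iff atLeastAtMost_iff; linarith?)
  then show "isCont (GI \<beta> 1) x" using GI_deriv1(2) DERIV_isCont by blast
qed

lemma HI1_cont:
  fixes \<beta> c a b :: real assumes "\<bar>c\<bar> < \<beta>/2" "-\<beta>/2 < a + c" "b + c < \<beta>/2"
  shows "continuous_on {a..b} (HI \<beta> c 1)"
proof (rule continuous_at_imp_continuous_on, safe)
  fix x assume "x \<in> {a..b}"
  then have "\<bar>x + c\<bar> < \<beta>/2" using assms by (simp only: abs_less_iff atLeastAtMost_iff; linarith?)
  then show "isCont (HI \<beta> c 1) x" using HI_deriv1(2)[OF assms(1)] DERIV_isCont by blast
qed

lemma htilde_props:
  fixes \<beta> q :: real assumes "\<beta> > 0" "q > 0"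
  shows "0 < htilde \<beta> q" "htilde \<beta> q < \<beta>" "GI \<beta> 1 (htilde \<beta> q) = q"
proof -
  obtain h1 where h1: "0 < h1" "h1 < \<beta>" "q \<le> GI \<beta> 1 h1" using GI1_unbounded[OF assms(1)] by blast
  have "\<exists>h. 0 \<le> h \<and> h \<le> h1 \<and> GI \<beta> 1 h = q"
  proof (rule IVT')
    show "GI \<beta> 1 0 \<le> q" using GI1_zero[of \<beta>] assms by simp
  qed (use h1 assms GI1_cont[of \<beta> 0 h1] in auto)
  then obtain h where h: "0 \<le> h" "h \<le> h1" "GI \<beta> 1 h = q" by blast
  have "h \<noteq> 0" using h(3) assms(2) GI1_zero[of \<beta>] by auto
  then have hp: "0 < h" using h(1) by simp
  have "htilde \<beta> q = h" by (rule htilde_eq) (use h h1 in auto)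
  then show "0 < htilde \<beta> q" "htilde \<beta> q < \<beta>" "GI \<beta> 1 (htilde \<beta> q) = q" using hp h h1 by auto
qed

lemma sdelta_props:
  fixes \<beta> \<delta> q :: real assumes "0 < \<delta>" "\<delta> < \<beta>"
  shows "-\<delta> < sdelta \<beta> \<delta> q" "sdelta \<beta> \<delta> q < \<beta> - \<delta>" "HI \<beta> (\<delta> - \<beta>/2) 1 (sdelta \<beta> \<delta> q) = q"
proof -
  let ?c = "\<delta> - \<beta>/2"
  have c: "\<bar>?c\<bar> < \<beta>/2" using assms by (simp only: abs_less_iff; linarith?)
  obtain s1 where s1: "0 < s1" "s1 < \<beta>/2 - ?c" "q \<le> HI \<beta> ?c 1 s1" using HI1_unbounded_up[OF c] by blast
  obtain t where t: "0 < t" "t < \<beta>/2 + ?c" "HI \<beta> ?c 1 (-t) \<le> q" using HI1_unbounded_low[OF c] by blast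
  have "\<exists>s. -t \<le> s \<and> s \<le> s1 \<and> HI \<beta> ?c 1 s = q"
    by (rule IVT') (use s1 t HI1_cont[OF c, of "-t" s1] in auto)
  then obtain s where s: "-t \<le> s" "s \<le> s1" "HI \<beta> ?c 1 s = q" by blast
  have s2: "-\<delta> < s" "s < \<beta> - \<delta>" using s s1 t by auto
  have "sdelta \<beta> \<delta> q = s" by (rule sdelta_eq[OF assms s2 s(3)])
  then show "-\<delta> < sdelta \<beta> \<delta> q" "sdelta \<beta> \<delta> q < \<beta> - \<delta>" "HI \<beta> ?c 1 (sdelta \<beta> \<delta> q) = q" using s2 s by auto
qed



lemma strict_convex_key:
  fixes f f' :: "real \<Rightarrow> real"
  assumes iv: "\<And>x y t. x \<in> S \<Longrightarrow> y \<in> S \<Longrightarrow> x \<le> t \<Longrightarrow> t \<le> y \<Longrightarrow> t \<in> S"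
    and D: "\<And>x. x \<in> S \<Longrightarrow> (f has_real_derivative f' x) (at x)"
    and mono: "\<And>x y. x \<in> S \<Longrightarrow> y \<in> S \<Longrightarrow> x < y \<Longrightarrow> f' x < f' y"
    and xy: "x \<in> S" "y \<in> S" "x < y" and u: "0 < u" "u < 1"
  shows "f (u * x + (1 - u) * y) < u * f x + (1 - u) * f y"
proof -
  define z where "z = u * x + (1 - u) * y"
  have zx: "z - x = (1 - u) * (y - x)" by (simp add: z_def algebra_simps)
  have yz: "y - z = u * (y - x)" by (simp add: z_def algebra_simps)
  have p1: "0 < (1 - u) * (y - x)" using xy u by auto
  have p2: "0 < u * (y - x)" using xy u by auto
  have xz: "x < z" using p1 zx by linarith
  have zy: "z < y" using p2 yz by linarith
  have "\<exists>a. x < a \<and> a < z \<and> f z - f x = (z - x) * f' a"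
  proof (rule MVT2[OF xz])
    fix t assume "x \<le> t" "t \<le> z"
    then have "t \<in> S" using iv[OF xy(1,2)] zy by auto
    then show "(f has_real_derivative f' t) (at t)" by (rule D)
  qed
  then obtain a where a: "x < a" "a < z" "f z - f x = (z - x) * f' a" by blast
  have "\<exists>b. z < b \<and> b < y \<and> f y - f z = (y - z) * f' b"
  proof (rule MVT2[OF zy])
    fix t assume "z \<le> t" "t \<le> y"
    then have "t \<in> S" using iv[OF xy(1,2)] xz by auto
    then show "(f has_real_derivative f' t) (at t)" by (rule D)
  qed
  then obtain b where b: "z < b" "b < y" "f y - f z = (y - z) * f' b" by blast
  have aS: "a \<in> S" using iv[OF xy(1,2)] a xz zy by auto
  have bS: "b \<in> S" using iv[OF xy(1,2)] b xz zy by auto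
  have ab: "f' a < f' b" using mono[OF aS bS] a b by linarith
  have "u * f x + (1 - u) * f y - f z = u * (1 - u) * (y - x) * (f' b - f' a)"
  proof -
    have "u * f x + (1 - u) * f y - f z = - u * (f z - f x) + (1 - u) * (f y - f z)" by (simp add: algebra_simps)
    also have "\<dots> = - u * ((1 - u) * (y - x) * f' a) + (1 - u) * (u * (y - x) * f' b)"
      unfolding a(3) b(3) zx yz by simp
    also have "\<dots> = u * (1 - u) * (y - x) * (f' b - f' a)" by (simp add: algebra_simps)
    finally show ?thesis .
  qed
  moreover have "u * (1 - u) * (y - x) * (f' b - f' a) > 0" using u xy ab by simp
  ultimately show ?thesis unfolding z_def by linarith
qed

lemma strict_convex_from_deriv:
  fixes f f' :: "real \<Rightarrow> real"
  assumes cv: "convex S"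
    and iv: "\<And>x y t. x \<in> S \<Longrightarrow> y \<in> S \<Longrightarrow> x \<le> t \<Longrightarrow> t \<le> y \<Longrightarrow> t \<in> S"
    and D: "\<And>x. x \<in> S \<Longrightarrow> (f has_real_derivative f' x) (at x)"
    and mono: "\<And>x y. x \<in> S \<Longrightarrow> y \<in> S \<Longrightarrow> x < y \<Longrightarrow> f' x < f' y"
  shows "strict_convex_on S f"
  unfolding strict_convex_on_def
proof (intro conjI cv ballI impI allI)
  fix x y u :: real assume xy: "x \<in> S" "y \<in> S" "x \<noteq> y" and u: "0 < u \<and> u < 1"
  show "f (u * x + (1 - u) * y) < u * f x + (1 - u) * f y"
  proof (cases "x < y")
    case True
    show ?thesis
      apply (rule strict_convex_key[of S f f'])
           apply (fact iv) apply (fact D) apply (fact mono)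
      using xy True u by auto
  next
    case False
    then have "y < x" using xy by auto
    have "f ((1 - u) * y + (1 - (1 - u)) * x) < (1 - u) * f y + (1 - (1 - u)) * f x"
      apply (rule strict_convex_key[of S f f'])
           apply (fact iv) apply (fact D) apply (fact mono)
      using xy \<open>y < x\<close> u by auto
    then show ?thesis by (simp add: algebra_simps)
  qed
qed

lemma strict_concave_from_deriv:
  fixes f f' :: "real \<Rightarrow> real"
  assumes cv: "convex S"
    and iv: "\<And>x y t. x \<in> S \<Longrightarrow> y \<in> S \<Longrightarrow> x \<le> t \<Longrightarrow> t \<le> y \<Longrightarrow> t \<in> S"
    and D: "\<And>x. x \<in> S \<Longrightarrow> (f has_real_derivative f' x) (at x)"
    and mono: "\<And>x y. x \<in> S \<Longrightarrow> y \<in> S \<Longrightarrow> x < y \<Longrightarrow> f' y < f' x"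
  shows "strict_concave_on S f"
  unfolding strict_concave_on_def
proof (rule strict_convex_from_deriv[OF cv iv])
  fix x assume "x \<in> S"
  then show "((\<lambda>x. - f x) has_real_derivative - f' x) (at x)" using D DERIV_minus by blast
next
  fix x y assume "x \<in> S" "y \<in> S" "x < y"
  then show "- f' x < - f' y" using mono by simp
qed

lemma deriv_strict_mono_on:
  fixes g g' :: "real \<Rightarrow> real"
  assumes "\<And>x. x \<in> S \<Longrightarrow> (g has_real_derivative g' x) (at x)" "\<And>x. x \<in> S \<Longrightarrow> g' x > 0"
    and iv: "\<And>x y t. x \<in> S \<Longrightarrow> y \<in> S \<Longrightarrow> x \<le> t \<Longrightarrow> t \<le> y \<Longrightarrow> t \<in> S"
    and "x \<in> S" "y \<in> S" "x < y"
  shows "g x < g y"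
  by (rule DERIV_pos_imp_increasing[OF assms(6)]) (use assms in \<open>blast\<close>)

lemma deriv_strict_anti_on:
  fixes g g' :: "real \<Rightarrow> real"
  assumes "\<And>x. x \<in> S \<Longrightarrow> (g has_real_derivative g' x) (at x)" "\<And>x. x \<in> S \<Longrightarrow> g' x < 0"
    and iv: "\<And>x y t. x \<in> S \<Longrightarrow> y \<in> S \<Longrightarrow> x \<le> t \<Longrightarrow> t \<le> y \<Longrightarrow> t \<in> S"
    and "x \<in> S" "y \<in> S" "x < y"
  shows "g y < g x"
  by (rule DERIV_neg_imp_decreasing[OF assms(6)]) (use assms in \<open>blast\<close>)

lemma C1I:
  fixes f D :: "real \<Rightarrow> real"
  assumes "\<And>x. x \<in> S \<Longrightarrow> (f has_real_derivative D x) (at x)" "continuous_on S D"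
  shows "f C1_differentiable_on S"
  unfolding C1_differentiable_on_def using assms has_real_derivative_iff_has_vector_derivative by blast

lemma cont_from_deriv:
  fixes D D' :: "real \<Rightarrow> real"
  assumes "\<And>x. x \<in> S \<Longrightarrow> (D has_real_derivative D' x) (at x)"
  shows "continuous_on S D"
  by (rule continuous_at_imp_continuous_on) (use assms DERIV_isCont in blast)

lemma deriv_glue:
  fixes f g :: "real \<Rightarrow> real"
  assumes f: "(f has_real_derivative D) (at a0)" and g: "(g has_real_derivative D) (at a0)" and e: "f a0 = g a0"
  shows "((\<lambda>a. if a < a0 then f a else g a) has_real_derivative D) (at a0)"
proof -
  let ?F = "\<lambda>a. if a < a0 then f a else g a"
  have L: "((\<lambda>y. (?F y - ?F a0) / (y - a0)) \<longlongrightarrow> D) (at_left a0)"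
  proof -
    have "(f has_real_derivative D) (at a0 within {..<a0})" using f by (rule has_field_derivative_at_within)
    then have "((\<lambda>y. (f y - f a0) / (y - a0)) \<longlongrightarrow> D) (at_left a0)" by (simp add: has_field_derivative_iff)
    moreover have "eventually (\<lambda>y. (f y - f a0) / (y - a0) = (?F y - ?F a0) / (y - a0)) (at_left a0)"
    proof -
      have "eventually (\<lambda>x. x \<in> {a0 - 1<..<a0}) (at_left a0)" by (rule eventually_at_left_real) simp
      then show ?thesis by eventually_elim (use e in auto)
    qed
    ultimately show ?thesis by (rule Lim_transform_eventually)
  qed
  have R: "((\<lambda>y. (?F y - ?F a0) / (y - a0)) \<longlongrightarrow> D) (at_right a0)"
  proof -
    have "(g has_real_derivative D) (at a0 within {a0<..})" using g by (rule has_field_derivative_at_within)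
    then have "((\<lambda>y. (g y - g a0) / (y - a0)) \<longlongrightarrow> D) (at_right a0)" by (simp add: has_field_derivative_iff)
    moreover have "eventually (\<lambda>y. (g y - g a0) / (y - a0) = (?F y - ?F a0) / (y - a0)) (at_right a0)"
      using eventually_at_right_less[of a0] by eventually_elim auto
    ultimately show ?thesis by (rule Lim_transform_eventually)
  qed
  have "((\<lambda>y. (?F y - ?F a0) / (y - a0)) \<longlongrightarrow> D) (at a0)"
    using L R by (simp add: filterlim_at_split)
  then show ?thesis by (simp add: has_field_derivative_iff)
qed



lemma HI_G0:
  fixes \<beta> m :: real
  shows "HI \<beta> (-(m/2)) 0 m = GI \<beta> 0 m"
  unfolding HI_def GI_def
proof (rule integral_cong)
  fix x :: real
  have "m * x + -(m/2) = m * (x - 1/2)" by (simp add: algebra_simps)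
  then show "x ^ 0 * LD \<beta> 0 (m * x + -(m/2)) = (x - 1/2) ^ 0 * LD \<beta> 0 (m * (x - 1/2))" by simp
qed

lemma HI_G1:
  fixes \<beta> m :: real assumes "0 < m" "m < \<beta>"
  shows "HI \<beta> (-(m/2)) 1 m = GI \<beta> 1 m"
proof -
  have mb: "\<bar>m\<bar> < \<beta>" using assms by simp
  have Z: "((\<lambda>x. (1/2) * L1 \<beta> (m * (x - 1/2))) has_integral 0) {0..1}"
  proof -
    let ?A = "\<lambda>x. (1/2) * L0 \<beta> (m * (x - 1/2)) / m"
    have I: "((\<lambda>x. (1/2) * L1 \<beta> (m * (x - 1/2))) has_integral (?A 1 - ?A 0)) {0..1}"
    proof (rule ftc01)
      fix x :: real assume x: "x \<in> {0..1}"
      have d: "((\<lambda>x. m * (x - 1/2)) has_real_derivative m * (1 - 0)) (at x)"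
        by (intro DERIV_cmult DERIV_diff DERIV_ident DERIV_const)
      have l: "((\<lambda>x. L0 \<beta> (m * (x - 1/2))) has_real_derivative L1 \<beta> (m * (x - 1/2)) * (m * (1 - 0))) (at x)"
        by (rule DERIV_chain2[OF L0_deriv[OF rangeG[OF mb x]] d])
      have "(?A has_real_derivative (1/2) * (L1 \<beta> (m * (x - 1/2)) * (m * (1 - 0))) / m) (at x)"
        by (intro DERIV_cdivide DERIV_cmult l)
      then show "(?A has_real_derivative (1/2) * L1 \<beta> (m * (x - 1/2))) (at x)" using assms by simp
    qed
    have eq: "?A 1 - ?A 0 = 0" using L0_even[of \<beta> "m/2"] by simp
    show ?thesis using I unfolding eq .
  qed
  have G: "((\<lambda>x. (x - 1/2)^1 * LD \<beta> 1 (m * (x - 1/2))) has_integral GI \<beta> 1 m) {0..1}"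
    unfolding GI_def by (rule integrable_integral[OF intG[OF mb]]) simp
  have "((\<lambda>x. (x - 1/2)^1 * LD \<beta> 1 (m * (x - 1/2)) + (1/2) * L1 \<beta> (m * (x - 1/2))) has_integral (GI \<beta> 1 m + 0)) {0..1}"
    by (rule has_integral_add[OF G Z])
  moreover have "(\<lambda>x. (x - 1/2)^1 * LD \<beta> 1 (m * (x - 1/2)) + (1/2) * L1 \<beta> (m * (x - 1/2))) = (\<lambda>x. x^1 * LD \<beta> 1 (m * x + -(m/2)))"
  proof
    fix x :: real
    have "m * x + -(m/2) = m * (x - 1/2)" by (simp add: algebra_simps)
    then show "(x - 1/2)^1 * LD \<beta> 1 (m * (x - 1/2)) + (1/2) * L1 \<beta> (m * (x - 1/2)) = x^1 * LD \<beta> 1 (m * x + -(m/2))"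
      by (simp add: LD_simps algebra_simps)
  qed
  ultimately have "((\<lambda>x. x^1 * LD \<beta> 1 (m * x + -(m/2))) has_integral GI \<beta> 1 m) {0..1}" by simp
  then show ?thesis unfolding HI_def by (rule integral_unique)
qed

lemma HI1_at_negc_nonpos:
  fixes \<beta> c :: real assumes "\<bar>c\<bar> < \<beta>/2" "c \<le> 0"
  shows "HI \<beta> c 1 (-c) \<le> 0"
proof -
  have sc: "\<bar>-c + c\<bar> < \<beta>/2" using assms by simp
  have "integral {0..1::real} (\<lambda>x. x^1 * LD \<beta> 1 ((-c) * x + c)) \<le> integral {0..1::real} (\<lambda>x. 0::real)"
  proof (rule integral_le)
    show "(\<lambda>x. x^1 * LD \<beta> 1 ((-c) * x + c)) integrable_on {0..1}" by (rule intH[OF assms(1) sc]) simp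
    fix x :: real assume x: "x \<in> {0..1}"
    then have r: "\<bar>(-c) * x + c\<bar> < \<beta>/2" using rangeH[OF assms(1) sc] by blast
    have "(-c) * x + c = c * (1 - x)" by (simp add: algebra_simps)
    moreover have "c * (1 - x) \<le> 0" using x assms(2) by (simp add: mult_nonpos_nonneg)
    ultimately have le: "(-c) * x + c \<le> 0" by simp
    have bpos: "\<beta> > 0" using abs_ge_zero[of c] assms(1) by linarith
    have "L1 \<beta> ((-c) * x + c) \<le> 0" by (rule L1_sign(4)[OF r bpos le])
    then show "x^1 * LD \<beta> 1 ((-c) * x + c) \<le> 0" using x by (simp add: LD_simps mult_nonneg_nonpos)
  qed (rule integrable_0)
  then show ?thesis unfolding HI_def by simp
qed

lemma HI1_at_negc_pos:
  fixes \<beta> c :: real assumes "\<bar>c\<bar> < \<beta>/2" "c > 0"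
  shows "HI \<beta> c 1 (-c) > 0"
proof -
  have sc: "\<bar>-c + c\<bar> < \<beta>/2" using assms by simp
  have "integral {0..1::real} (\<lambda>x. exp (-\<beta>) * c * (x * (1 - x))) \<le> integral {0..1} (\<lambda>x. x^1 * LD \<beta> 1 ((-c) * x + c))"
  proof (rule integral_le)
    show "(\<lambda>x. x^1 * LD \<beta> 1 ((-c) * x + c)) integrable_on {0..1}" by (rule intH[OF assms(1) sc]) simp
    show "(\<lambda>x. exp (-\<beta>) * c * (x * (1 - x))) integrable_on {0..1}"
      using has_integral_mult_right[OF poly_int3] by blast
    fix x :: real assume x: "x \<in> {0..1}"
    then have r: "\<bar>(-c) * x + c\<bar> < \<beta>/2" using rangeH[OF assms(1) sc] by blast
    have e: "(-c) * x + c = c * (1 - x)" by (simp add: algebra_simps)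
    have "c * (1 - x) \<ge> 0" using x assms(2) by simp
    then have "L1 \<beta> ((-c) * x + c) \<ge> exp (-\<beta>) * (c * (1 - x))" using L1_lin(1)[OF r] e by simp
    then have "x * L1 \<beta> ((-c) * x + c) \<ge> x * (exp (-\<beta>) * (c * (1 - x)))" using x by (intro mult_left_mono) auto
    then show "exp (-\<beta>) * c * (x * (1 - x)) \<le> x^1 * LD \<beta> 1 ((-c) * x + c)"
      by (simp add: LD_simps algebra_simps)
  qed
  moreover have "integral {0..1} (\<lambda>x. exp (-\<beta>) * c * (x * (1 - x))) = exp (-\<beta>) * c * (1/6)"
    using has_integral_mult_right[OF poly_int3] by (rule integral_unique)
  moreover have "exp (-\<beta>) * c * (1/6) > 0" using assms by simp
  ultimately show ?thesis unfolding HI_def by linarith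
qed



lemma sqrt_cmp:
  fixes a q :: real assumes "a > 0" "q > 0"
  shows "a < 1 / sqrt q \<longleftrightarrow> q < 1 / a^2"
proof -
  have sq: "sqrt q > 0" using assms by simp
  have "a < 1 / sqrt q \<longleftrightarrow> a * sqrt q < 1" using sq by (simp add: pos_less_divide_eq)
  also have "a * sqrt q = sqrt (a^2 * q)" using assms by (simp add: real_sqrt_mult)
  also have "sqrt (a^2 * q) < 1 \<longleftrightarrow> a^2 * q < 1" by simp
  also have "a^2 * q < 1 \<longleftrightarrow> q < 1 / a^2" using assms by (simp add: pos_less_divide_eq mult.commute)
  finally show ?thesis .
qed

locale mset =
  fixes \<beta> \<delta> :: real
  assumes d0: "0 < \<delta>" and d1: "\<delta> < \<beta>"
begin

lemma bpos: "\<beta> > 0" using d0 d1 by simp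

lemma cb: "\<bar>\<delta> - \<beta>/2\<bar> < \<beta>/2" using d0 d1 by (simp only: abs_less_iff; linarith?)

lemma dom_H: "-\<delta> < p \<Longrightarrow> p < \<beta> - \<delta> \<Longrightarrow> \<bar>p + (\<delta> - \<beta>/2)\<bar> < \<beta>/2"
  by (intro abs_less_iff[THEN iffD2] conjI) linarith+

lemma dom_G: "-\<beta> < p \<Longrightarrow> p < \<beta> \<Longrightarrow> \<bar>p\<bar> < \<beta>"
  by (intro abs_less_iff[THEN iffD2] conjI) linarith+

end

sublocale mset \<subseteq> G: branch "-\<beta>" \<beta> "GI \<beta> 0" "GI \<beta> 1" "GI \<beta> 2" "htilde \<beta>" "ln (Gamma \<beta>)"
proof
  show "-\<beta> < \<beta>" using bpos by simp
  fix p assume p: "-\<beta> < p" "p < \<beta>"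
  show "(GI \<beta> 0 has_real_derivative GI \<beta> 1 p) (at p)" by (rule GI_deriv1(1)[OF dom_G[OF p]])
  show "(GI \<beta> 1 has_real_derivative GI \<beta> 2 p) (at p)" by (rule GI_deriv1(2)[OF dom_G[OF p]])
  have "exp (-\<beta>) / 12 > 0" by simp
  then show "GI \<beta> 2 p > 0" using GI2_pos[OF dom_G[OF p]] by linarith
next
  show "continuous_on {-\<beta><..<\<beta>} (GI \<beta> 2)"
    by (rule cont_from_deriv[where D'="GI \<beta> 3"]) (use GI_deriv1(3) dom_G in auto)
next
  fix q :: real assume q: "q > 0"
  show "-\<beta> < htilde \<beta> q \<and> htilde \<beta> q < \<beta> \<and> GI \<beta> 1 (htilde \<beta> q) = q"
    using htilde_props[OF bpos q] by auto
next
  fix z assume z: "-\<beta> < z" "z < \<beta>" "GI \<beta> 1 z > 0"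
  have "z > 0"
  proof (rule ccontr)
    assume "\<not> z > 0"
    then consider "z = 0" | "z < 0" by linarith
    then show False
    proof cases
      case 1 then show False using z GI1_zero[of \<beta>] by simp
    next
      case 2 then show False using GI1_strict_mono[OF z(1) 2, of] z GI1_zero[of \<beta>] bpos by simp
    qed
  qed
  then show "htilde \<beta> (GI \<beta> 1 z) = z" by (intro htilde_eq) (use z in auto)
qed

sublocale mset \<subseteq> H: branch "-\<delta>" "\<beta> - \<delta>" "HI \<beta> (\<delta> - \<beta>/2) 0" "HI \<beta> (\<delta> - \<beta>/2) 1" "HI \<beta> (\<delta> - \<beta>/2) 2" "sdelta \<beta> \<delta>" "ln (Gamma \<beta>)"
proof
  show "-\<delta> < \<beta> - \<delta>" using bpos by simp
  fix p assume p: "-\<delta> < p" "p < \<beta> - \<delta>"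
  show "(HI \<beta> (\<delta> - \<beta>/2) 0 has_real_derivative HI \<beta> (\<delta> - \<beta>/2) 1 p) (at p)" by (rule HI_deriv1(1)[OF cb dom_H[OF p]])
  show "(HI \<beta> (\<delta> - \<beta>/2) 1 has_real_derivative HI \<beta> (\<delta> - \<beta>/2) 2 p) (at p)" by (rule HI_deriv1(2)[OF cb dom_H[OF p]])
  have "exp (-\<beta>) / 3 > 0" by simp
  then show "HI \<beta> (\<delta> - \<beta>/2) 2 p > 0" using HI2_pos[OF cb dom_H[OF p]] by linarith
next
  show "continuous_on {-\<delta><..<\<beta> - \<delta>} (HI \<beta> (\<delta> - \<beta>/2) 2)"
    by (rule cont_from_deriv[where D'="HI \<beta> (\<delta> - \<beta>/2) 3"]) (use HI_deriv1(3)[OF cb] dom_H in auto)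
next
  fix q :: real assume q: "q > 0"
  show "-\<delta> < sdelta \<beta> \<delta> q \<and> sdelta \<beta> \<delta> q < \<beta> - \<delta> \<and> HI \<beta> (\<delta> - \<beta>/2) 1 (sdelta \<beta> \<delta> q) = q"
    using sdelta_props[OF d0 d1] by auto
next
  fix z assume z: "-\<delta> < z" "z < \<beta> - \<delta>" "HI \<beta> (\<delta> - \<beta>/2) 1 z > 0"
  show "sdelta \<beta> \<delta> (HI \<beta> (\<delta> - \<beta>/2) 1 z) = z" by (rule sdelta_eq[OF d0 d1 z(1,2) refl])
qed

lemma GI1_le_iff:
  fixes \<beta> h1 h2 :: real assumes "\<bar>h1\<bar> < \<beta>" "\<bar>h2\<bar> < \<beta>"
  shows "h1 \<le> h2 \<longleftrightarrow> GI \<beta> 1 h1 \<le> GI \<beta> 1 h2"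
proof -
  have a: "-\<beta> < h1" "h1 < \<beta>" "-\<beta> < h2" "h2 < \<beta>" using assms by (simp_all only: abs_less_iff; linarith?)+
  show ?thesis
  proof
    assume "h1 \<le> h2"
    then consider "h1 = h2" | "h1 < h2" by linarith
    then show "GI \<beta> 1 h1 \<le> GI \<beta> 1 h2"
    proof cases
      case 2 then show ?thesis using GI1_strict_mono[OF a(1) 2 a(4)] by simp
    qed simp
  next
    assume le: "GI \<beta> 1 h1 \<le> GI \<beta> 1 h2"
    show "h1 \<le> h2"
    proof (rule ccontr)
      assume "\<not> h1 \<le> h2" then have "h2 < h1" by simp
      then show False using GI1_strict_mono[OF a(3) _ a(2)] le by fastforce
    qed
  qed
qed

lemma HI1_le_iff:
  fixes \<beta> c s1 s2 :: real assumes "\<bar>c\<bar> < \<beta>/2" "\<bar>s1 + c\<bar> < \<beta>/2" "\<bar>s2 + c\<bar> < \<beta>/2"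
  shows "s1 \<le> s2 \<longleftrightarrow> HI \<beta> c 1 s1 \<le> HI \<beta> c 1 s2"
proof -
  have a: "-\<beta>/2 < s1 + c" "s1 + c < \<beta>/2" "-\<beta>/2 < s2 + c" "s2 + c < \<beta>/2" using assms(2,3) by (simp_all only: abs_less_iff; linarith?)+
  show ?thesis
  proof
    assume "s1 \<le> s2"
    then consider "s1 = s2" | "s1 < s2" by linarith
    then show "HI \<beta> c 1 s1 \<le> HI \<beta> c 1 s2"
    proof cases
      case 2 then show ?thesis using HI1_strict_mono[OF assms(1) a(1) 2 a(4)] by simp
    qed simp
  next
    assume le: "HI \<beta> c 1 s1 \<le> HI \<beta> c 1 s2"
    show "s1 \<le> s2"
    proof (rule ccontr)
      assume "\<not> s1 \<le> s2" then have "s2 < s1" by simp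
      then show False using HI1_strict_mono[OF assms(1) a(3) _ a(2)] le by fastforce
    qed
  qed
qed

context mset
begin

lemma TT_G:
  assumes a: "a > 0" and c: "\<delta> \<le> delta0 \<beta> (1/a^2)"
  shows "TT \<beta> \<delta> a = G.TB a"
proof -
  have q: "1/a^2 > 0" using a by simp
  have h: "-\<beta> < htilde \<beta> (1/a^2)" "htilde \<beta> (1/a^2) < \<beta>" using G.kI[OF q] by auto
  have "psi \<beta> (1/a^2) \<delta> = G.Phi (1/a^2)"
    unfolding psi_def G.Phi_def using c d0 GG_eq[OF dom_G[OF h]] by simp
  then show ?thesis unfolding TT_def G.TB_def by simp
qed

lemma TT_H:
  assumes a: "a > 0" and c: "\<not> \<delta> \<le> delta0 \<beta> (1/a^2)"
  shows "TT \<beta> \<delta> a = H.TB a"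
proof -
  have q: "1/a^2 > 0" using a by simp
  have h: "-\<delta> < sdelta \<beta> \<delta> (1/a^2)" "sdelta \<beta> \<delta> (1/a^2) < \<beta> - \<delta>" using H.kI[OF q] by auto
  have "psi \<beta> (1/a^2) \<delta> = H.Phi (1/a^2)"
    unfolding psi_def H.Phi_def using c HH_eq[OF cb dom_H[OF h]] by simp
  then show ?thesis unfolding TT_def H.TB_def by simp
qed

lemma delta0_iff: "\<delta> \<le> delta0 \<beta> q \<longleftrightarrow> htilde \<beta> q \<le> \<beta> - 2 * \<delta>"
  unfolding delta0_def by linarith

lemma TT_H_all:
  assumes "\<beta>/2 \<le> \<delta>" "a > 0"
  shows "TT \<beta> \<delta> a = H.TB a"
proof (rule TT_H[OF assms(2)])
  have q: "1/a^2 > 0" using assms by simp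
  have "htilde \<beta> (1/a^2) > 0" using htilde_props[OF bpos q] by simp
  then show "\<not> \<delta> \<le> delta0 \<beta> (1/a^2)" unfolding delta0_iff using assms by linarith
qed

lemma q0_pos: assumes "\<delta> < \<beta>/2" shows "GI \<beta> 1 (\<beta> - 2*\<delta>) > 0"
  using GI1_strict_mono[of \<beta> 0 "\<beta> - 2*\<delta>"] GI1_zero[of \<beta>] assms d0 bpos by simp

lemma small_iff:
  assumes "\<delta> < \<beta>/2" "q > 0"
  shows "\<delta> \<le> delta0 \<beta> q \<longleftrightarrow> q \<le> GI \<beta> 1 (\<beta> - 2*\<delta>)"
proof -
  have h: "-\<beta> < htilde \<beta> q" "htilde \<beta> q < \<beta>" "GI \<beta> 1 (htilde \<beta> q) = q" using G.kI[OF assms(2)] by auto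
  have m: "\<bar>\<beta> - 2*\<delta>\<bar> < \<beta>" using assms d0 by (intro abs_less_iff[THEN iffD2] conjI) linarith+
  show ?thesis unfolding delta0_iff using GI1_le_iff[OF dom_G[OF h(1,2)] m] h(3) by simp
qed

lemma qdelta_eq:
  assumes "\<delta> < \<beta>/2"
  shows "qdelta \<beta> \<delta> = GI \<beta> 1 (\<beta> - 2*\<delta>)"
proof -
  have "{q. q > 0 \<and> \<delta> > delta0 \<beta> q} = {GI \<beta> 1 (\<beta> - 2*\<delta>)<..}"
    using small_iff[OF assms] q0_pos[OF assms] by (auto simp: not_le[symmetric])
  then show ?thesis unfolding qdelta_def by simp
qed

end



context mset
begin

lemma TT_glue:
  assumes "\<delta> < \<beta>/2" "a > 0"
  shows "TT \<beta> \<delta> a = (if a < 1 / sqrt (GI \<beta> 1 (\<beta> - 2*\<delta>)) then H.TB a else G.TB a)"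
proof -
  have q: "1/a^2 > 0" using assms by simp
  have "a < 1 / sqrt (GI \<beta> 1 (\<beta> - 2*\<delta>)) \<longleftrightarrow> \<not> \<delta> \<le> delta0 \<beta> (1/a^2)"
    using sqrt_cmp[OF assms(2) q0_pos[OF assms(1)]] small_iff[OF assms(1) q] by auto
  then show ?thesis using TT_G[OF assms(2)] TT_H[OF assms(2)] by auto
qed

lemma junction:
  assumes "\<delta> < \<beta>/2"
  defines "a0 \<equiv> 1 / sqrt (GI \<beta> 1 (\<beta> - 2*\<delta>))"
  shows "a0 > 0" "G.TB a0 = H.TB a0" "G.TD a0 = H.TD a0"
proof -
  define m where "m = \<beta> - 2*\<delta>"
  define q0 where "q0 = GI \<beta> 1 m"
  have q0: "q0 > 0" using q0_pos[OF assms(1)] by (simp add: q0_def m_def)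
  show "a0 > 0" using q0 by (simp add: a0_def q0_def m_def)
  have aq: "1/a0^2 = q0" unfolding a0_def power_one_over using q0 by (simp add: q0_def m_def)
  have m: "0 < m" "m < \<beta>" using assms d0 by (auto simp: m_def)
  have ht: "htilde \<beta> q0 = m" by (rule htilde_eq) (use m in \<open>auto simp: q0_def\<close>)
  have ce: "\<delta> - \<beta>/2 = -(m/2)" unfolding m_def by (simp add: field_simps)
  have sd: "sdelta \<beta> \<delta> q0 = m"
    by (rule sdelta_eq[OF d0 d1]) (use m d0 d1 HI_G1[OF m] in \<open>auto simp: ce q0_def m_def\<close>)
  have ph: "G.Phi q0 = H.Phi q0"
    unfolding G.Phi_def H.Phi_def unfolding ht sd ce HI_G0 ..
  show "G.TB a0 = H.TB a0" unfolding G.TB_def H.TB_def aq ph ..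
  show "G.TD a0 = H.TD a0" unfolding G.TD_def H.TD_def aq ph ht sd ..
qed

lemma G_TDD_neg:
  assumes "a > 0" shows "G.TDD a < 0"
proof -
  define q where "q = 1/a^2"
  have q: "q > 0" using assms by (simp add: q_def)
  have k: "htilde \<beta> q > 0" using htilde_props[OF bpos q] by simp
  have "GI \<beta> 2 (htilde \<beta> q) > 0" using G.F2pos G.kI[OF q] by auto
  then have "htilde \<beta> q + 2 * q / GI \<beta> 2 (htilde \<beta> q) > 0" using k q by (simp add: add_pos_pos)
  moreover have "-2/a^3 < 0" using assms by simp
  ultimately show ?thesis unfolding G.TDD_def q_def[symmetric] by (simp add: mult_neg_pos)
qed

lemma H_TDD_sign:
  assumes "a > 0"
  shows "H.TDD a < 0 \<longleftrightarrow> sdelta \<beta> \<delta> (1/a^2) + (\<delta> - \<beta>/2) > 0"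
    "H.TDD a > 0 \<longleftrightarrow> sdelta \<beta> \<delta> (1/a^2) + (\<delta> - \<beta>/2) < 0"
proof -
  define q where "q = 1/a^2"
  define s where "s = sdelta \<beta> \<delta> q"
  define c where "c = \<delta> - \<beta>/2"
  have q: "q > 0" using assms by (simp add: q_def)
  have s: "-\<delta> < s" "s < \<beta> - \<delta>" "HI \<beta> c 1 s = q" using H.kI[OF q] by (auto simp: s_def c_def)
  have sc: "\<bar>s + c\<bar> < \<beta>/2" using dom_H[OF s(1,2)] by (simp add: c_def)
  have F2: "HI \<beta> c 2 s > 0" using H.F2pos s by (simp add: c_def)
  have id: "s * HI \<beta> c 2 s + 2 * q = L1 \<beta> (s + c)" using HI_ident[OF cb[folded c_def] sc] s(3) by simp
  have eq: "s + 2 * q / HI \<beta> c 2 s = L1 \<beta> (s + c) / HI \<beta> c 2 s"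
    using F2 id by (simp add: field_simps)
  have T0: "H.TDD a = -2/a^3 * (s + 2 * q / HI \<beta> c 2 s)"
    unfolding H.TDD_def by (simp add: s_def q_def c_def)
  have T: "H.TDD a = -2/a^3 * (L1 \<beta> (s + c) / HI \<beta> c 2 s)" unfolding T0 eq ..
  define K where "K = -2/a^3"
  define X where "X = L1 \<beta> (s + c) / HI \<beta> c 2 s"
  have a3: "K < 0" using assms by (simp add: K_def)
  have T: "H.TDD a = K * X" unfolding T K_def X_def ..
  have "H.TDD a < 0 \<longleftrightarrow> L1 \<beta> (s + c) / HI \<beta> c 2 s > 0"
    unfolding T X_def[symmetric] using a3 by (auto simp: mult_less_0_iff)
  also have "\<dots> \<longleftrightarrow> L1 \<beta> (s + c) > 0" using F2 by (simp add: zero_less_divide_iff)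
  also have "\<dots> \<longleftrightarrow> s + c > 0"
  proof
    assume l: "L1 \<beta> (s + c) > 0"
    show "s + c > 0"
    proof (rule ccontr)
      assume "\<not> s + c > 0" then have "s + c \<le> 0" by simp
      then have "L1 \<beta> (s + c) \<le> 0" by (rule L1_sign(4)[OF sc bpos])
      then show False using l by simp
    qed
  qed (rule L1_sign(1)[OF sc bpos])
  finally show "H.TDD a < 0 \<longleftrightarrow> sdelta \<beta> \<delta> (1/a^2) + (\<delta> - \<beta>/2) > 0" by (simp add: s_def q_def c_def)
  have "H.TDD a > 0 \<longleftrightarrow> L1 \<beta> (s + c) / HI \<beta> c 2 s < 0"
    unfolding T X_def[symmetric] using a3 by (auto simp: zero_less_mult_iff)
  also have "\<dots> \<longleftrightarrow> L1 \<beta> (s + c) < 0" using F2 by (simp add: divide_less_0_iff)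
  also have "\<dots> \<longleftrightarrow> s + c < 0"
  proof
    assume l: "L1 \<beta> (s + c) < 0"
    show "s + c < 0"
    proof (rule ccontr)
      assume "\<not> s + c < 0" then have "s + c \<ge> 0" by simp
      then have "L1 \<beta> (s + c) \<ge> 0" by (rule L1_sign(3)[OF sc bpos])
      then show False using l by simp
    qed
  qed (rule L1_sign(2)[OF sc bpos])
  finally show "H.TDD a > 0 \<longleftrightarrow> sdelta \<beta> \<delta> (1/a^2) + (\<delta> - \<beta>/2) < 0" by (simp add: s_def q_def c_def)
qed

lemma s_vs_qs:
  assumes "q > 0"
  shows "sdelta \<beta> \<delta> q + (\<delta> - \<beta>/2) > 0 \<longleftrightarrow> q > HI \<beta> (\<delta> - \<beta>/2) 1 (-(\<delta> - \<beta>/2))"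
    "sdelta \<beta> \<delta> q + (\<delta> - \<beta>/2) \<ge> 0 \<longleftrightarrow> q \<ge> HI \<beta> (\<delta> - \<beta>/2) 1 (-(\<delta> - \<beta>/2))"
proof -
  define c where "c = \<delta> - \<beta>/2"
  define s where "s = sdelta \<beta> \<delta> q"
  have s: "-\<delta> < s" "s < \<beta> - \<delta>" "HI \<beta> c 1 s = q" using H.kI[OF assms] by (auto simp: s_def c_def)
  have sc: "\<bar>s + c\<bar> < \<beta>/2" using dom_H[OF s(1,2)] by (simp add: c_def)
  have mc: "\<bar>-c + c\<bar> < \<beta>/2" using bpos by simp
  have c: "\<bar>c\<bar> < \<beta>/2" using cb by (simp add: c_def)
  have "s + c \<ge> 0 \<longleftrightarrow> -c \<le> s" by linarith
  also have "\<dots> \<longleftrightarrow> HI \<beta> c 1 (-c) \<le> HI \<beta> c 1 s" by (rule HI1_le_iff[OF c mc sc])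
  finally show "sdelta \<beta> \<delta> q + (\<delta> - \<beta>/2) \<ge> 0 \<longleftrightarrow> q \<ge> HI \<beta> (\<delta> - \<beta>/2) 1 (-(\<delta> - \<beta>/2))"
    using s(3) by (simp add: s_def c_def)
  have "s + c > 0 \<longleftrightarrow> \<not> s \<le> -c" by linarith
  also have "\<dots> \<longleftrightarrow> \<not> HI \<beta> c 1 s \<le> HI \<beta> c 1 (-c)" using HI1_le_iff[OF c sc mc] by simp
  finally show "sdelta \<beta> \<delta> q + (\<delta> - \<beta>/2) > 0 \<longleftrightarrow> q > HI \<beta> (\<delta> - \<beta>/2) 1 (-(\<delta> - \<beta>/2))"
    using s(3) by (simp add: s_def c_def not_le)
qed

lemma small_pos:
  assumes "\<delta> \<le> \<beta>/2" "q > 0"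
  shows "sdelta \<beta> \<delta> q + (\<delta> - \<beta>/2) > 0"
proof -
  have qs: "HI \<beta> (\<delta> - \<beta>/2) 1 (-(\<delta> - \<beta>/2)) \<le> 0" by (rule HI1_at_negc_nonpos[OF cb]) (use assms in simp)
  then show ?thesis using s_vs_qs(1)[OF assms(2)] assms(2) by linarith
qed

lemma qstar_small:
  assumes "\<delta> \<le> \<beta>/2"
  shows "qstar \<beta> \<delta> = 0"
proof -
  note pos = small_pos[OF assms]
  have "{q. q > 0 \<and> \<delta> - \<beta>/2 + sdelta \<beta> \<delta> q \<ge> 0} = {0<..}"
    using pos by (force simp: add.commute)
  then show "qstar \<beta> \<delta> = 0" unfolding qstar_def by simp
qed

lemma qstar_big:
  assumes "\<beta>/2 < \<delta>"
  shows "qstar \<beta> \<delta> = HI \<beta> (\<delta> - \<beta>/2) 1 (-(\<delta> - \<beta>/2))" "qstar \<beta> \<delta> > 0"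
proof -
  have qs: "HI \<beta> (\<delta> - \<beta>/2) 1 (-(\<delta> - \<beta>/2)) > 0" by (rule HI1_at_negc_pos[OF cb]) (use assms in simp)
  have eqv: "\<delta> - \<beta>/2 + sdelta \<beta> \<delta> q \<ge> 0 \<longleftrightarrow> q \<ge> HI \<beta> (\<delta> - \<beta>/2) 1 (-(\<delta> - \<beta>/2))" if "q > 0" for q
    using s_vs_qs(2)[OF that] by (simp add: add.commute)
  have "{q. q > 0 \<and> \<delta> - \<beta>/2 + sdelta \<beta> \<delta> q \<ge> 0} = {HI \<beta> (\<delta> - \<beta>/2) 1 (-(\<delta> - \<beta>/2))..}"
  proof (rule set_eqI)
    fix q
    show "q \<in> {q. q > 0 \<and> \<delta> - \<beta>/2 + sdelta \<beta> \<delta> q \<ge> 0} \<longleftrightarrow> q \<in> {HI \<beta> (\<delta> - \<beta>/2) 1 (-(\<delta> - \<beta>/2))..}"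
    proof (cases "q > 0")
      case True then show ?thesis using eqv[OF True] by simp
    next
      case False then show ?thesis using qs by auto
    qed
  qed
  then show e: "qstar \<beta> \<delta> = HI \<beta> (\<delta> - \<beta>/2) 1 (-(\<delta> - \<beta>/2))" unfolding qstar_def by simp
  show "qstar \<beta> \<delta> > 0" using e qs by simp
qed

end



context mset
begin

lemma H_TD_cont: "continuous_on {0<..} H.TD"
  by (rule cont_from_deriv[where D'=H.TDD]) (use H.TD_deriv in auto)

lemma G_TD_cont: "continuous_on {0<..} G.TD"
  by (rule cont_from_deriv[where D'=G.TDD]) (use G.TD_deriv in auto)

lemma TT_deriv_big:
  assumes "\<beta>/2 \<le> \<delta>" "a > 0"
  shows "(TT \<beta> \<delta> has_real_derivative H.TD a) (at a)"
  by (rule has_field_derivative_transform_within_open[OF H.TB_deriv[OF assms(2)], where S="{0<..}"])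
     (use assms TT_H_all in auto)

definition "a0 = 1 / sqrt (GI \<beta> 1 (\<beta> - 2*\<delta>))"
definition "TDm a = (if a \<le> a0 then H.TD a else G.TD a)"

lemma TT_deriv_small:
  assumes "\<delta> < \<beta>/2" "a > 0"
  shows "(TT \<beta> \<delta> has_real_derivative TDm a) (at a)"
proof -
  note J = junction[OF assms(1), folded a0_def]
  let ?F = "\<lambda>a. if a < a0 then H.TB a else G.TB a"
  have F: "(?F has_real_derivative TDm a) (at a)"
  proof (cases "a < a0")
    case True
    have e: "TDm a = H.TD a" using True by (simp add: TDm_def)
    show ?thesis unfolding e
      by (rule has_field_derivative_transform_within_open[OF H.TB_deriv[OF assms(2)], where S="{..<a0}"])
         (use True in auto)
  next
    case False
    show ?thesis
    proof (cases "a = a0")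
      case True
      have "(?F has_real_derivative G.TD a0) (at a0)"
        by (rule deriv_glue[OF _ G.TB_deriv[OF J(1)]]) (use H.TB_deriv[OF J(1)] J in auto)
      then show ?thesis using True J by (simp add: TDm_def)
    next
      case False2: False
      then have "a0 < a" using False by simp
      have e: "TDm a = G.TD a" using \<open>a0 < a\<close> by (simp add: TDm_def)
      show ?thesis unfolding e
        by (rule has_field_derivative_transform_within_open[OF G.TB_deriv[OF assms(2)], where S="{a0<..}"])
           (use \<open>a0 < a\<close> in auto)
    qed
  qed
  show ?thesis
    by (rule has_field_derivative_transform_within_open[OF F, where S="{0<..}"])
       (use assms TT_glue[OF assms(1)] in \<open>auto simp: a0_def\<close>)
qed

lemma TDm_cont:
  assumes "\<delta> < \<beta>/2"
  shows "continuous_on {0<..} TDm"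
proof -
  note J = junction[OF assms(1), folded a0_def]
  have c1: "continuous_on {x \<in> {0<..}. x \<le> a0} H.TD" by (rule continuous_on_subset[OF H_TD_cont]) auto
  have c2: "continuous_on {x \<in> {0<..}. a0 \<le> x} G.TD" by (rule continuous_on_subset[OF G_TD_cont]) auto
  have "continuous_on {0<..} (\<lambda>x. if x \<le> a0 then H.TD x else G.TD x)"
    by (rule continuous_on_cases_le[where h="\<lambda>x. x", OF c1 c2]) (use J in \<open>auto intro!: continuous_intros\<close>)
  then show ?thesis unfolding TDm_def[abs_def] .
qed

lemma TT_C1: "TT \<beta> \<delta> C1_differentiable_on {0<..}"
proof (cases "\<beta>/2 \<le> \<delta>")
  case True
  show ?thesis by (rule C1I[OF _ H_TD_cont]) (use TT_deriv_big[OF True] in auto)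
next
  case False
  then have s: "\<delta> < \<beta>/2" by simp
  show ?thesis by (rule C1I[OF _ TDm_cont[OF s]]) (use TT_deriv_small[OF s] in auto)
qed

lemma H_TD_anti:
  assumes "\<delta> \<le> \<beta>/2" "0 < x" "x < y"
  shows "H.TD y < H.TD x"
proof -
  have d: "(H.TD has_real_derivative H.TDD z) (at z)" if "z \<in> {0<..}" for z using H.TD_deriv that by auto
  have n: "H.TDD z < 0" if z: "z \<in> {0<..}" for z
  proof -
    have q: "1/z^2 > 0" using z by simp
    show ?thesis using H_TDD_sign(1) small_pos[OF assms(1) q] z by auto
  qed
  show ?thesis by (rule deriv_strict_anti_on[where S="{0<..}" and x=x and y=y, OF d n]) (use assms in auto)
qed

lemma G_TD_anti:
  assumes "0 < x" "x < y"
  shows "G.TD y < G.TD x"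
proof -
  have d: "(G.TD has_real_derivative G.TDD z) (at z)" if "z \<in> {0<..}" for z using G.TD_deriv that by auto
  have n: "G.TDD z < 0" if z: "z \<in> {0<..}" for z using G_TDD_neg z by auto
  show ?thesis by (rule deriv_strict_anti_on[where S="{0<..}" and x=x and y=y, OF d n]) (use assms in auto)
qed

lemma concave_small:
  assumes "\<delta> \<le> \<beta>/2"
  shows "strict_concave_on {0<..} (TT \<beta> \<delta>)"
proof (cases "\<beta>/2 \<le> \<delta>")
  case True
  show ?thesis
    by (rule strict_concave_from_deriv[where f'=H.TD])
       (use TT_deriv_big[OF True] H_TD_anti[OF assms] in auto)
next
  case False
  then have s: "\<delta> < \<beta>/2" by simp
  note J = junction[OF s, folded a0_def]
  show ?thesis
  proof (rule strict_concave_from_deriv[where f'=TDm])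
    fix x :: real assume "x \<in> {0<..}" then show "(TT \<beta> \<delta> has_real_derivative TDm x) (at x)" using TT_deriv_small[OF s] by auto
  next
    fix x y :: real assume xy: "x \<in> {0<..}" "y \<in> {0<..}" "x < y"
    show "TDm y < TDm x"
    proof (cases "y \<le> a0")
      case True then show ?thesis using H_TD_anti[OF assms] xy by (auto simp: TDm_def)
    next
      case y: False
      show ?thesis
      proof (cases "x \<le> a0")
        case True
        have "H.TD a0 \<le> H.TD x"
        proof (cases "x = a0")
          case False then show ?thesis using H_TD_anti[OF assms, of x a0] True xy by auto
        qed simp
        moreover have "G.TD y < G.TD a0" using G_TD_anti[OF J(1)] y by auto
        ultimately show ?thesis using True y J by (auto simp: TDm_def)
      next
        case False then show ?thesis using G_TD_anti xy y by (auto simp: TDm_def)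
      qed
    qed
  qed auto
qed

lemma C1_small:
  assumes "\<delta> < \<beta>/2"
  shows "TT \<beta> \<delta> C1_differentiable_on ({0<..<1 / sqrt (qdelta \<beta> \<delta>)} \<union> {1 / sqrt (qdelta \<beta> \<delta>)<..})"
    "deriv (TT \<beta> \<delta>) C1_differentiable_on ({0<..<1 / sqrt (qdelta \<beta> \<delta>)} \<union> {1 / sqrt (qdelta \<beta> \<delta>)<..})"
proof -
  note J = junction[OF assms(1), folded a0_def]
  have e: "1 / sqrt (qdelta \<beta> \<delta>) = a0" unfolding qdelta_eq[OF assms] a0_def ..
  show "TT \<beta> \<delta> C1_differentiable_on ({0<..<1 / sqrt (qdelta \<beta> \<delta>)} \<union> {1 / sqrt (qdelta \<beta> \<delta>)<..})"
    unfolding e by (rule C1_differentiable_on_subset[OF TT_C1]) (use J in auto)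
  have dT: "deriv (TT \<beta> \<delta>) y = TDm y" if "y > 0" for y
    using TT_deriv_small[OF assms that] by (rule DERIV_imp_deriv)
  define DD where "DD x = (if x \<le> a0 then H.TDD x else G.TDD x)" for x
  have D: "(deriv (TT \<beta> \<delta>) has_real_derivative DD x) (at x)" if x: "x \<in> {0<..<a0} \<union> {a0<..}" for x
  proof (cases "x < a0")
    case True
    have e: "DD x = H.TDD x" using True by (simp add: DD_def)
    show ?thesis unfolding e
      by (rule has_field_derivative_transform_within_open[OF H.TD_deriv, where S="{0<..<a0}"])
         (use True x dT in \<open>auto simp: TDm_def\<close>)
  next
    case False
    then have xa: "a0 < x" using x by auto
    have e: "DD x = G.TDD x" using xa by (simp add: DD_def)
    show ?thesis unfolding e
      by (rule has_field_derivative_transform_within_open[OF G.TD_deriv, where S="{a0<..}"])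
         (use xa J dT in \<open>auto simp: TDm_def\<close>)
  qed
  have c1: "continuous_on {x \<in> {0<..<a0} \<union> {a0<..}. x \<le> a0} H.TDD" by (rule continuous_on_subset[OF H.TDD_cont]) auto
  have c2: "continuous_on {x \<in> {0<..<a0} \<union> {a0<..}. a0 \<le> x} G.TDD" by (rule continuous_on_subset[OF G.TDD_cont]) (use J in auto)
  have C: "continuous_on ({0<..<a0} \<union> {a0<..}) DD"
    unfolding DD_def by (rule continuous_on_cases_le[where h="\<lambda>x. x", OF c1 c2]) (auto intro!: continuous_intros)
  show "deriv (TT \<beta> \<delta>) C1_differentiable_on ({0<..<1 / sqrt (qdelta \<beta> \<delta>)} \<union> {1 / sqrt (qdelta \<beta> \<delta>)<..})"
    unfolding e by (rule C1I[OF D C])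
qed

lemma C2_big:
  assumes "\<beta>/2 \<le> \<delta>"
  shows "deriv (TT \<beta> \<delta>) C1_differentiable_on {0<..}"
proof -
  have dT: "deriv (TT \<beta> \<delta>) y = H.TD y" if "y > 0" for y
    using TT_deriv_big[OF assms that] by (rule DERIV_imp_deriv)
  have D: "(deriv (TT \<beta> \<delta>) has_real_derivative H.TDD x) (at x)" if x: "x \<in> {0<..}" for x
    by (rule has_field_derivative_transform_within_open[OF H.TD_deriv, where S="{0<..}"])
       (use x dT in auto)
  show ?thesis by (rule C1I[OF D H.TDD_cont])
qed

lemma sqrt_cmp2:
  fixes a q :: real assumes "a > 0" "q > 0"
  shows "1 / sqrt q < a \<longleftrightarrow> 1 / a^2 < q"
proof -
  have sq: "sqrt q > 0" using assms by simp
  have "1 / sqrt q < a \<longleftrightarrow> 1 < a * sqrt q" using sq by (simp add: divide_less_eq)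
  also have "a * sqrt q = sqrt (a^2 * q)" using assms by (simp add: real_sqrt_mult)
  also have "1 < sqrt (a^2 * q) \<longleftrightarrow> 1 < a^2 * q" by simp
  also have "1 < a^2 * q \<longleftrightarrow> 1 / a^2 < q" using assms by (simp add: divide_less_eq mult.commute)
  finally show ?thesis .
qed

lemma conv_big:
  assumes "\<beta>/2 < \<delta>"
  shows "strict_concave_on {0<..<1 / sqrt (qstar \<beta> \<delta>)} (TT \<beta> \<delta>)"
    "strict_convex_on {1 / sqrt (qstar \<beta> \<delta>)<..} (TT \<beta> \<delta>)"
proof -
  define qs where "qs = qstar \<beta> \<delta>"
  have qs: "qs > 0" using qstar_big(2)[OF assms] by (simp add: qs_def)
  have qse: "qs = HI \<beta> (\<delta> - \<beta>/2) 1 (-(\<delta> - \<beta>/2))" using qstar_big(1)[OF assms] by (simp add: qs_def)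
  have big: "\<beta>/2 \<le> \<delta>" using assms by simp
  have neg: "H.TDD z < 0" if z: "z \<in> {0<..<1 / sqrt qs}" for z
  proof -
    have zp: "z > 0" "z < 1 / sqrt qs" using z by auto
    have q: "1/z^2 > 0" using zp by simp
    have "qs < 1/z^2" using sqrt_cmp[OF zp(1) qs] zp by simp
    then have "sdelta \<beta> \<delta> (1/z^2) + (\<delta> - \<beta>/2) > 0" using s_vs_qs(1)[OF q] qse by simp
    then show ?thesis using H_TDD_sign(1)[OF zp(1)] by simp
  qed
  have pos: "H.TDD z > 0" if z: "z \<in> {1 / sqrt qs<..}" for z
  proof -
    have z0: "1 / sqrt qs < z" using z by auto
    have zp: "z > 0" using z0 qs by (smt (verit) divide_pos_pos real_sqrt_gt_zero)
    have q: "1/z^2 > 0" using zp by simp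
    have "1/z^2 < qs" using sqrt_cmp2[OF zp qs] z0 by simp
    then have "\<not> sdelta \<beta> \<delta> (1/z^2) + (\<delta> - \<beta>/2) \<ge> 0" using s_vs_qs(2)[OF q] qse by simp
    then show ?thesis using H_TDD_sign(2)[OF zp] by simp
  qed
  have dpos: "(TT \<beta> \<delta> has_real_derivative H.TD z) (at z)" if "z > 0" for z
    by (rule TT_deriv_big[OF big that])
  show "strict_concave_on {0<..<1 / sqrt (qstar \<beta> \<delta>)} (TT \<beta> \<delta>)"
    unfolding qs_def[symmetric]
  proof (rule strict_concave_from_deriv[where f'=H.TD])
    fix x assume "x \<in> {0<..<1 / sqrt qs}" then show "(TT \<beta> \<delta> has_real_derivative H.TD x) (at x)" using dpos by auto
  next
    fix x y assume xy: "x \<in> {0<..<1 / sqrt qs}" "y \<in> {0<..<1 / sqrt qs}" "x < y"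
    have d: "(H.TD has_real_derivative H.TDD z) (at z)" if "z \<in> {0<..<1 / sqrt qs}" for z using H.TD_deriv that by auto
    show "H.TD y < H.TD x"
      by (rule deriv_strict_anti_on[where S="{0<..<1 / sqrt qs}" and x=x and y=y, OF d neg]) (use xy in auto)
  qed auto
  show "strict_convex_on {1 / sqrt (qstar \<beta> \<delta>)<..} (TT \<beta> \<delta>)"
    unfolding qs_def[symmetric]
  proof (rule strict_convex_from_deriv[where f'=H.TD])
    fix x assume "x \<in> {1 / sqrt qs<..}"
    then have "x > 0" using qs by (smt (verit) divide_pos_pos greaterThan_iff real_sqrt_gt_zero)
    then show "(TT \<beta> \<delta> has_real_derivative H.TD x) (at x)" using dpos by auto
  next
    fix x y assume xy: "x \<in> {1 / sqrt qs<..}" "y \<in> {1 / sqrt qs<..}" "x < y"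
    have d: "(H.TD has_real_derivative H.TDD z) (at z)" if "z \<in> {1 / sqrt qs<..}" for z
    proof -
      have "z > 0" using that qs by (smt (verit) divide_pos_pos greaterThan_iff real_sqrt_gt_zero)
      then show ?thesis using H.TD_deriv by auto
    qed
    show "H.TD x < H.TD y"
      by (rule deriv_strict_mono_on[where S="{1 / sqrt qs<..}" and x=x and y=y, OF d pos]) (use xy in auto)
  qed auto
qed

end

theorem mainTheorem12:
  fixes \<beta> \<delta> :: real
  assumes "\<beta> > beta_c" and "0 < \<delta>" and "\<delta> < \<beta>"
  shows "TT \<beta> \<delta> C1_differentiable_on {0<..}
    \<and> (\<delta> < \<beta>/2 \<longrightarrow>
         TT \<beta> \<delta> C1_differentiable_on ({0<..<1 / sqrt (qdelta \<beta> \<delta>)} \<union> {1 / sqrt (qdelta \<beta> \<delta>)<..})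
       \<and> deriv (TT \<beta> \<delta>) C1_differentiable_on ({0<..<1 / sqrt (qdelta \<beta> \<delta>)} \<union> {1 / sqrt (qdelta \<beta> \<delta>)<..}))
    \<and> (\<beta>/2 \<le> \<delta> \<longrightarrow>
         deriv (TT \<beta> \<delta>) C1_differentiable_on {0<..})
    \<and> (\<delta> \<le> \<beta>/2 \<longrightarrow> qstar \<beta> \<delta> = 0 \<and> strict_concave_on {0<..} (TT \<beta> \<delta>))
    \<and> (\<beta>/2 < \<delta> \<longrightarrow> qstar \<beta> \<delta> > 0
         \<and> strict_concave_on {0<..<1 / sqrt (qstar \<beta> \<delta>)} (TT \<beta> \<delta>)
         \<and> strict_convex_on {1 / sqrt (qstar \<beta> \<delta>)<..} (TT \<beta> \<delta>))"
proof -
  interpret mset \<beta> \<delta> by unfold_locales (use assms in auto)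
  show ?thesis
    using TT_C1 C1_small C2_big qstar_small concave_small qstar_big(2) conv_big by auto
qed

end
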